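(* Let $G$ be a group which is the central product of normal subgroups $H$ and $K$ (so $G=HK$, $[H,K]=1$), and let $D$ be a divisible abelian group with trivial $G$-action. For any subgroup $B$ of $G$ contained in $H'\cap K'$ (such $B$ is central), the inflation homomorphism $\inf:\operatorname{H}^2(G/B,D)\to \operatorname{H}^2(G,D)$ is surjective.
   Context: $X'$ denotes the commutator subgroup of $X$; $\operatorname{H}^2(X,D)$ is second cohomology with trivial coefficients. *)

theory Defs
  imports "HOL-Algebra.Algebra" "HOL-Library.FuncSet"
begin

text \<open>Second cohomology with trivial coefficients in an abelian group D
  (written multiplicatively, as in HOL-Algebra), via inhomogeneous cochains.\<close>

definition two_cocycles :: "('a,'b) monoid_scheme \<Rightarrow> ('d,'e) monoid_scheme \<Rightarrow> ('a \<times> 'a \<Rightarrow> 'd) set" where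
  "two_cocycles G D = {f. f \<in> (carrier G \<times> carrier G) \<rightarrow>\<^sub>E carrier D \<and>
     (\<forall>x\<in>carrier G. \<forall>y\<in>carrier G. \<forall>z\<in>carrier G.
        f (x, y) \<otimes>\<^bsub>D\<^esub> f (x \<otimes>\<^bsub>G\<^esub> y, z) = f (y, z) \<otimes>\<^bsub>D\<^esub> f (x, y \<otimes>\<^bsub>G\<^esub> z))}"

definition cohomologous :: "('a,'b) monoid_scheme \<Rightarrow> ('d,'e) monoid_scheme \<Rightarrow> ('a \<times> 'a \<Rightarrow> 'd) rel" where
  "cohomologous G D = {(f, f'). f \<in> two_cocycles G D \<and> f' \<in> two_cocycles G D \<and>
     (\<exists>g \<in> carrier G \<rightarrow> carrier D. \<forall>x\<in>carrier G. \<forall>y\<in>carrier G.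
        f (x, y) = f' (x, y) \<otimes>\<^bsub>D\<^esub> (g x \<otimes>\<^bsub>D\<^esub> g y \<otimes>\<^bsub>D\<^esub> inv\<^bsub>D\<^esub> (g (x \<otimes>\<^bsub>G\<^esub> y))))}"

definition H2 :: "('a,'b) monoid_scheme \<Rightarrow> ('d,'e) monoid_scheme \<Rightarrow> ('a \<times> 'a \<Rightarrow> 'd) set set" where
  "H2 G D = two_cocycles G D // cohomologous G D"

definition inflate_cocycle :: "('a,'b) monoid_scheme \<Rightarrow> 'a set \<Rightarrow> ('a set \<times> 'a set \<Rightarrow> 'd) \<Rightarrow> ('a \<times> 'a \<Rightarrow> 'd)" where
  "inflate_cocycle G B f = (\<lambda>(x, y) \<in> carrier G \<times> carrier G. f (B #>\<^bsub>G\<^esub> x, B #>\<^bsub>G\<^esub> y))"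

definition inflation :: "('a,'b) monoid_scheme \<Rightarrow> 'a set \<Rightarrow> ('d,'e) monoid_scheme \<Rightarrow> ('a set \<times> 'a set \<Rightarrow> 'd) set \<Rightarrow> ('a \<times> 'a \<Rightarrow> 'd) set" where
  "inflation G B D C = cohomologous G D `` {inflate_cocycle G B (SOME f. f \<in> C)}"

definition divisible_group :: "('d,'e) monoid_scheme \<Rightarrow> bool" where
  "divisible_group D \<longleftrightarrow> (\<forall>d\<in>carrier D. \<forall>n::nat. n > 0 \<longrightarrow> (\<exists>x\<in>carrier D. x [^]\<^bsub>D\<^esub> n = d))"

end

theory Submission
  imports Defs
begin

lemma hom_int_pow_aux:
  assumes "group E" "group D" "subgroup S E" "\<And>z. z \<in> S \<Longrightarrow> \<psi> z \<in> carrier D"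
    "\<And>a b. a\<in>S \<Longrightarrow> b\<in>S \<Longrightarrow> \<psi> (a \<otimes>\<^bsub>E\<^esub> b) = \<psi> a \<otimes>\<^bsub>D\<^esub> \<psi> b" "a \<in> S"
  shows "\<psi> (a [^]\<^bsub>E\<^esub> (m::int)) = \<psi> a [^]\<^bsub>D\<^esub> m"
proof -
  interpret E: group E by fact
  interpret D: group D by fact
  have S1: "\<one>\<^bsub>E\<^esub> \<in> S" using assms(3) subgroup.one_closed by blast
  have SC: "\<And>z. z \<in> S \<Longrightarrow> z \<in> carrier E" using assms(3) subgroup.subset by blast
  have one: "\<psi> \<one>\<^bsub>E\<^esub> = \<one>\<^bsub>D\<^esub>"
  proof -
    have "\<psi> \<one>\<^bsub>E\<^esub> \<otimes>\<^bsub>D\<^esub> \<psi> \<one>\<^bsub>E\<^esub> = \<psi> \<one>\<^bsub>E\<^esub> \<otimes>\<^bsub>D\<^esub> \<one>\<^bsub>D\<^esub>"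
      using assms(5)[OF S1 S1] assms(4)[OF S1] by simp
    then show ?thesis using assms(4)[OF S1] D.l_cancel by blast
  qed
  have aS: "\<And>n::nat. a [^]\<^bsub>E\<^esub> n \<in> S"
    using E.subgroup_int_pow_closed[OF assms(3,6)] by (metis int_pow_int)
  have nat: "\<And>n::nat. \<psi> (a [^]\<^bsub>E\<^esub> n) = \<psi> a [^]\<^bsub>D\<^esub> n"
  proof -
    fix n :: nat show "\<psi> (a [^]\<^bsub>E\<^esub> n) = \<psi> a [^]\<^bsub>D\<^esub> n"
    proof (induction n)
      case 0 then show ?case using one by simp
    next
      case (Suc n)
      have "a [^]\<^bsub>E\<^esub> n \<in> S" using aS by blast
      then show ?case using Suc assms(5)[of "a [^]\<^bsub>E\<^esub> n" a] assms(6) by simp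
    qed
  qed
  have inv: "\<And>z. z \<in> S \<Longrightarrow> \<psi> (inv\<^bsub>E\<^esub> z) = inv\<^bsub>D\<^esub> (\<psi> z)"
  proof -
    fix z assume z: "z \<in> S"
    have iz: "inv\<^bsub>E\<^esub> z \<in> S" by (rule subgroup.m_inv_closed[OF assms(3) z])
    have "\<psi> (inv\<^bsub>E\<^esub> z) \<otimes>\<^bsub>D\<^esub> \<psi> z = \<one>\<^bsub>D\<^esub>"
      using assms(5)[OF iz z] one E.l_inv[OF SC[OF z]] by simp
    then show "\<psi> (inv\<^bsub>E\<^esub> z) = inv\<^bsub>D\<^esub> (\<psi> z)"
      using D.inv_equality[OF _ assms(4)[OF z] assms(4)[OF iz]] by simp
  qed
  show ?thesis
  proof (cases "m < 0")
    case True
    have "\<psi> (a [^]\<^bsub>E\<^esub> m) = \<psi> (inv\<^bsub>E\<^esub> (a [^]\<^bsub>E\<^esub> nat (-m)))"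
      using True by (simp only: int_pow_def2 if_True)
    also have "\<dots> = inv\<^bsub>D\<^esub> (\<psi> a [^]\<^bsub>D\<^esub> nat (-m))" by (simp only: inv[OF aS] nat)
    also have "\<dots> = \<psi> a [^]\<^bsub>D\<^esub> m" using True by (simp only: int_pow_def2[of D] if_True)
    finally show ?thesis .
  next
    case False
    have "\<psi> (a [^]\<^bsub>E\<^esub> m) = \<psi> (a [^]\<^bsub>E\<^esub> nat m)"
      using False by (simp only: int_pow_def2 if_False)
    also have "\<dots> = \<psi> a [^]\<^bsub>D\<^esub> nat m" by (simp only: nat)
    also have "\<dots> = \<psi> a [^]\<^bsub>D\<^esub> m" using False by (simp only: int_pow_def2[of D] if_False)
    finally show ?thesis .
  qed
qed

definition good :: "('e,'x) monoid_scheme \<Rightarrow> ('d,'y) monoid_scheme \<Rightarrow> 'e set \<Rightarrow> ('e \<Rightarrow> 'd) \<Rightarrow> ('e \<times> 'd) set \<Rightarrow> bool" where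
  "good E D A \<phi> \<Gamma> \<longleftrightarrow> \<Gamma> \<subseteq> carrier E \<times> carrier D \<and> subgroup (Domain \<Gamma>) E \<and> A \<subseteq> Domain \<Gamma> \<and>
     (\<forall>x u v. (x,u)\<in>\<Gamma> \<longrightarrow> (x,v)\<in>\<Gamma> \<longrightarrow> u = v) \<and>
     (\<forall>x u y v. (x,u)\<in>\<Gamma> \<longrightarrow> (y,v)\<in>\<Gamma> \<longrightarrow> (x \<otimes>\<^bsub>E\<^esub> y, u \<otimes>\<^bsub>D\<^esub> v) \<in> \<Gamma>) \<and>
     (\<forall>a\<in>A. (a, \<phi> a) \<in> \<Gamma>)"

lemma goodD:
  assumes "good E D A \<phi> \<Gamma>"
  shows goodD1: "\<Gamma> \<subseteq> carrier E \<times> carrier D" and goodD2: "subgroup (Domain \<Gamma>) E"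
    and goodD3: "A \<subseteq> Domain \<Gamma>"
    and goodD4: "\<And>x u v. (x,u)\<in>\<Gamma> \<Longrightarrow> (x,v)\<in>\<Gamma> \<Longrightarrow> u = v"
    and goodD5: "\<And>x u y v. (x,u)\<in>\<Gamma> \<Longrightarrow> (y,v)\<in>\<Gamma> \<Longrightarrow> (x \<otimes>\<^bsub>E\<^esub> y, u \<otimes>\<^bsub>D\<^esub> v) \<in> \<Gamma>"
    and goodD6: "\<And>a. a\<in>A \<Longrightarrow> (a, \<phi> a) \<in> \<Gamma>"
  using assms unfolding good_def by blast+

lemma good_extend:
  assumes E: "comm_group E" and D: "comm_group D" and dv: "divisible_group D"
    and g: "good E D A \<phi> \<Gamma>" and x: "x \<in> carrier E"
  shows "\<exists>\<Gamma>'. good E D A \<phi> \<Gamma>' \<and> \<Gamma> \<subseteq> \<Gamma>' \<and> x \<in> Domain \<Gamma>'"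
proof -
  interpret E: comm_group E by fact
  interpret D: comm_group D by fact
  define S where "S = Domain \<Gamma>"
  define \<psi> where "\<psi> z = (SOME u. (z,u) \<in> \<Gamma>)" for z
  have Sg: "subgroup S E" using g unfolding good_def S_def by blast
  have SC: "\<And>z. z \<in> S \<Longrightarrow> z \<in> carrier E" using subgroup.subset[OF Sg] by blast
  have \<psi>G: "\<And>z. z \<in> S \<Longrightarrow> (z, \<psi> z) \<in> \<Gamma>"
    unfolding S_def \<psi>_def by (metis DomainE someI_ex)
  have \<psi>u: "\<And>z u. (z,u) \<in> \<Gamma> \<Longrightarrow> \<psi> z = u"
  proof -
    fix z u assume zu: "(z,u) \<in> \<Gamma>"
    then have "z \<in> S" unfolding S_def by blast
    then show "\<psi> z = u" using \<psi>G zu g unfolding good_def by blast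
  qed
  have \<psi>c: "\<And>z. z \<in> S \<Longrightarrow> \<psi> z \<in> carrier D" using \<psi>G g unfolding good_def by blast
  have \<psi>m: "\<And>a b. a \<in> S \<Longrightarrow> b \<in> S \<Longrightarrow> \<psi> (a \<otimes>\<^bsub>E\<^esub> b) = \<psi> a \<otimes>\<^bsub>D\<^esub> \<psi> b"
  proof -
    fix a b assume "a \<in> S" "b \<in> S"
    then have "(a \<otimes>\<^bsub>E\<^esub> b, \<psi> a \<otimes>\<^bsub>D\<^esub> \<psi> b) \<in> \<Gamma>" using \<psi>G g unfolding good_def by blast
    then show "\<psi> (a \<otimes>\<^bsub>E\<^esub> b) = \<psi> a \<otimes>\<^bsub>D\<^esub> \<psi> b" by (rule \<psi>u)
  qed
  have \<psi>pow: "\<And>a m. a \<in> S \<Longrightarrow> \<psi> (a [^]\<^bsub>E\<^esub> (m::int)) = \<psi> a [^]\<^bsub>D\<^esub> m"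
    by (rule hom_int_pow_aux[OF E.is_group D.is_group Sg \<psi>c \<psi>m])
  have \<psi>inv: "\<And>a. a \<in> S \<Longrightarrow> \<psi> (inv\<^bsub>E\<^esub> a) = inv\<^bsub>D\<^esub> (\<psi> a)"
  proof -
    fix a assume a: "a \<in> S"
    have "\<psi> (a [^]\<^bsub>E\<^esub> (-1::int)) = \<psi> a [^]\<^bsub>D\<^esub> (-1::int)" by (rule \<psi>pow[OF a])
    then show "\<psi> (inv\<^bsub>E\<^esub> a) = inv\<^bsub>D\<^esub> (\<psi> a)"
      using E.int_pow_neg[OF SC[OF a], of 1] D.int_pow_neg[OF \<psi>c[OF a], of 1] SC[OF a] \<psi>c[OF a] by simp
  qed
  define P where "P = (\<exists>k::nat. 0 < k \<and> x [^]\<^bsub>E\<^esub> k \<in> S)"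
  define n where "n = (if P then (LEAST k::nat. 0 < k \<and> x [^]\<^bsub>E\<^esub> k \<in> S) else 0)"
  have nS: "x [^]\<^bsub>E\<^esub> n \<in> S"
  proof (cases P)
    case True
    then show ?thesis unfolding n_def P_def by (simp, metis (mono_tags, lifting) LeastI_ex)
  next
    case False
    then show ?thesis unfolding n_def using subgroup.one_closed[OF Sg] by simp
  qed
  have nmin: "\<And>k::nat. 0 < k \<Longrightarrow> k < n \<Longrightarrow> x [^]\<^bsub>E\<^esub> k \<notin> S"
    unfolding n_def using not_less_Least by (metis (mono_tags, lifting) less_nat_zero_code)
  have nP: "\<And>k::nat. 0 < k \<Longrightarrow> x [^]\<^bsub>E\<^esub> k \<in> S \<Longrightarrow> 0 < n"
    unfolding n_def P_def by (simp, metis (mono_tags, lifting) LeastI_ex)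
  have dvd: "\<And>k::int. x [^]\<^bsub>E\<^esub> k \<in> S \<Longrightarrow> int n dvd k"
  proof -
    fix k :: int assume k: "x [^]\<^bsub>E\<^esub> k \<in> S"
    show "int n dvd k"
    proof (cases "n = 0")
      case True
      show ?thesis
      proof (rule ccontr)
        assume "\<not> int n dvd k"
        then have "k \<noteq> 0" using True by simp
        show False
        proof (cases "k > 0")
          case True
          then have "x [^]\<^bsub>E\<^esub> nat k \<in> S" using k by (metis int_pow_int int_nat_eq less_le)
          then show False using nP[of "nat k"] True \<open>n = 0\<close> by simp
        next
          case False
          have "x [^]\<^bsub>E\<^esub> (-k) \<in> S" using k E.int_pow_neg[OF x, of k] subgroup.m_inv_closed[OF Sg] by simp
          then have "x [^]\<^bsub>E\<^esub> nat (-k) \<in> S" using False \<open>k \<noteq> 0\<close> by (metis int_pow_int int_nat_eq neg_0_le_iff_le linorder_not_less)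
          then show False using nP[of "nat (-k)"] False \<open>k \<noteq> 0\<close> \<open>n = 0\<close> by simp
        qed
      qed
    next
      case False
      define r where "r = k mod int n"
      define q where "q = k div int n"
      have kq: "k = int n * q + r" unfolding q_def r_def by simp
      have r0: "0 \<le> r" "r < int n" unfolding r_def using False by simp_all
      have "x [^]\<^bsub>E\<^esub> k = (x [^]\<^bsub>E\<^esub> (int n)) [^]\<^bsub>E\<^esub> q \<otimes>\<^bsub>E\<^esub> x [^]\<^bsub>E\<^esub> r"
        using kq E.int_pow_mult[OF x] E.int_pow_pow[OF x] by simp
      then have "x [^]\<^bsub>E\<^esub> r = inv\<^bsub>E\<^esub> ((x [^]\<^bsub>E\<^esub> (int n)) [^]\<^bsub>E\<^esub> q) \<otimes>\<^bsub>E\<^esub> x [^]\<^bsub>E\<^esub> k"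
        using x by (simp add: E.m_assoc[symmetric])
      moreover have "(x [^]\<^bsub>E\<^esub> (int n)) [^]\<^bsub>E\<^esub> q \<in> S"
        using E.subgroup_int_pow_closed[OF Sg] nS by (simp add: int_pow_int)
      ultimately have rS: "x [^]\<^bsub>E\<^esub> r \<in> S"
        using k subgroup.m_closed[OF Sg] subgroup.m_inv_closed[OF Sg] by metis
      have "r = 0"
      proof (rule ccontr)
        assume "r \<noteq> 0"
        then have "0 < nat r" "nat r < n" using r0 by simp_all
        moreover have "x [^]\<^bsub>E\<^esub> nat r \<in> S" using rS r0 by (metis int_pow_int int_nat_eq)
        ultimately show False using nmin by blast
      qed
      then show ?thesis using kq by simp
    qed
  qed
  obtain y where y: "y \<in> carrier D" "y [^]\<^bsub>D\<^esub> n = \<psi> (x [^]\<^bsub>E\<^esub> n)"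
  proof (cases "n = 0")
    case True
    have "\<psi> \<one>\<^bsub>E\<^esub> = \<one>\<^bsub>D\<^esub>"
      using \<psi>pow[OF subgroup.one_closed[OF Sg], of 0] by simp
    then show ?thesis using that[of "\<one>\<^bsub>D\<^esub>"] True by simp
  next
    case False
    then show ?thesis using that dv \<psi>c[OF nS] unfolding divisible_group_def by blast
  qed
  have yn: "\<psi> (x [^]\<^bsub>E\<^esub> (int n * m)) = y [^]\<^bsub>D\<^esub> (int n * m)" for m :: int
  proof -
    have "x [^]\<^bsub>E\<^esub> (int n * m) = (x [^]\<^bsub>E\<^esub> n) [^]\<^bsub>E\<^esub> m"
      using E.int_pow_pow[OF x, of "int n" m] by (simp add: int_pow_int)
    then have "\<psi> (x [^]\<^bsub>E\<^esub> (int n * m)) = (y [^]\<^bsub>D\<^esub> n) [^]\<^bsub>D\<^esub> m"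
      using \<psi>pow[OF nS, of m] y(2) by simp
    also have "\<dots> = y [^]\<^bsub>D\<^esub> (int n * m)"
      using D.int_pow_pow[OF y(1), of "int n" m] by (simp add: int_pow_int)
    finally show ?thesis .
  qed
  have wd: "\<psi> s \<otimes>\<^bsub>D\<^esub> y [^]\<^bsub>D\<^esub> k = \<psi> s' \<otimes>\<^bsub>D\<^esub> y [^]\<^bsub>D\<^esub> k'"
    if s: "s \<in> S" and s': "s' \<in> S" and eq: "s \<otimes>\<^bsub>E\<^esub> x [^]\<^bsub>E\<^esub> k = s' \<otimes>\<^bsub>E\<^esub> x [^]\<^bsub>E\<^esub> k'"
    for s s' and k k' :: int
  proof -
    have sc: "s \<in> carrier E" "s' \<in> carrier E" using SC s s' by auto
    have "x [^]\<^bsub>E\<^esub> (k - k') = x [^]\<^bsub>E\<^esub> k \<otimes>\<^bsub>E\<^esub> inv\<^bsub>E\<^esub> (x [^]\<^bsub>E\<^esub> k')"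
      using E.int_pow_mult[OF x, of k "-k'"] E.int_pow_neg[OF x] by simp
    also have "\<dots> = inv\<^bsub>E\<^esub> s \<otimes>\<^bsub>E\<^esub> s'"
    proof -
      have "inv\<^bsub>E\<^esub> s \<otimes>\<^bsub>E\<^esub> (s \<otimes>\<^bsub>E\<^esub> x [^]\<^bsub>E\<^esub> k) \<otimes>\<^bsub>E\<^esub> inv\<^bsub>E\<^esub> (x [^]\<^bsub>E\<^esub> k')
          = inv\<^bsub>E\<^esub> s \<otimes>\<^bsub>E\<^esub> (s' \<otimes>\<^bsub>E\<^esub> x [^]\<^bsub>E\<^esub> k') \<otimes>\<^bsub>E\<^esub> inv\<^bsub>E\<^esub> (x [^]\<^bsub>E\<^esub> k')"
        using eq by simp
      moreover have "inv\<^bsub>E\<^esub> s \<otimes>\<^bsub>E\<^esub> (s \<otimes>\<^bsub>E\<^esub> x [^]\<^bsub>E\<^esub> k) \<otimes>\<^bsub>E\<^esub> inv\<^bsub>E\<^esub> (x [^]\<^bsub>E\<^esub> k') = x [^]\<^bsub>E\<^esub> k \<otimes>\<^bsub>E\<^esub> inv\<^bsub>E\<^esub> (x [^]\<^bsub>E\<^esub> k')"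
        using sc x by (simp add: E.m_assoc[symmetric])
      moreover have "inv\<^bsub>E\<^esub> s \<otimes>\<^bsub>E\<^esub> (s' \<otimes>\<^bsub>E\<^esub> x [^]\<^bsub>E\<^esub> k') \<otimes>\<^bsub>E\<^esub> inv\<^bsub>E\<^esub> (x [^]\<^bsub>E\<^esub> k') = inv\<^bsub>E\<^esub> s \<otimes>\<^bsub>E\<^esub> s'"
        using sc x by (simp add: E.m_assoc)
      ultimately show ?thesis by simp
    qed
    finally have e1: "x [^]\<^bsub>E\<^esub> (k - k') = inv\<^bsub>E\<^esub> s \<otimes>\<^bsub>E\<^esub> s'" .
    have "inv\<^bsub>E\<^esub> s \<otimes>\<^bsub>E\<^esub> s' \<in> S"
      using subgroup.m_closed[OF Sg subgroup.m_inv_closed[OF Sg s] s'] .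
    then have "int n dvd (k - k')" using dvd e1 by simp
    then obtain m where m: "k - k' = int n * m" by (auto simp: dvd_def)
    have "inv\<^bsub>D\<^esub> (\<psi> s) \<otimes>\<^bsub>D\<^esub> \<psi> s' = y [^]\<^bsub>D\<^esub> (k - k')"
      using yn[of m] m e1 \<psi>m[OF subgroup.m_inv_closed[OF Sg s] s'] \<psi>inv[OF s] by simp
    also have "\<dots> = y [^]\<^bsub>D\<^esub> k \<otimes>\<^bsub>D\<^esub> inv\<^bsub>D\<^esub> (y [^]\<^bsub>D\<^esub> k')"
      using D.int_pow_mult[OF y(1), of k "-k'"] D.int_pow_neg[OF y(1)] by simp
    finally have e2: "inv\<^bsub>D\<^esub> (\<psi> s) \<otimes>\<^bsub>D\<^esub> \<psi> s' = y [^]\<^bsub>D\<^esub> k \<otimes>\<^bsub>D\<^esub> inv\<^bsub>D\<^esub> (y [^]\<^bsub>D\<^esub> k')" .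
    have c: "\<psi> s \<in> carrier D" "\<psi> s' \<in> carrier D" "y [^]\<^bsub>D\<^esub> k \<in> carrier D" "y [^]\<^bsub>D\<^esub> k' \<in> carrier D"
      using \<psi>c s s' y(1) by auto
    have "\<psi> s \<otimes>\<^bsub>D\<^esub> (inv\<^bsub>D\<^esub> (\<psi> s) \<otimes>\<^bsub>D\<^esub> \<psi> s') \<otimes>\<^bsub>D\<^esub> y [^]\<^bsub>D\<^esub> k'
       = \<psi> s \<otimes>\<^bsub>D\<^esub> (y [^]\<^bsub>D\<^esub> k \<otimes>\<^bsub>D\<^esub> inv\<^bsub>D\<^esub> (y [^]\<^bsub>D\<^esub> k')) \<otimes>\<^bsub>D\<^esub> y [^]\<^bsub>D\<^esub> k'"
      using e2 by simp
    moreover have "\<psi> s \<otimes>\<^bsub>D\<^esub> (inv\<^bsub>D\<^esub> (\<psi> s) \<otimes>\<^bsub>D\<^esub> \<psi> s') \<otimes>\<^bsub>D\<^esub> y [^]\<^bsub>D\<^esub> k' = \<psi> s' \<otimes>\<^bsub>D\<^esub> y [^]\<^bsub>D\<^esub> k'"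
      using c by (simp add: D.m_assoc[symmetric])
    moreover have "\<psi> s \<otimes>\<^bsub>D\<^esub> (y [^]\<^bsub>D\<^esub> k \<otimes>\<^bsub>D\<^esub> inv\<^bsub>D\<^esub> (y [^]\<^bsub>D\<^esub> k')) \<otimes>\<^bsub>D\<^esub> y [^]\<^bsub>D\<^esub> k' = \<psi> s \<otimes>\<^bsub>D\<^esub> y [^]\<^bsub>D\<^esub> k"
      using c by (simp add: D.m_assoc)
    ultimately show ?thesis by simp
  qed
  define \<Gamma>' where "\<Gamma>' = {(s \<otimes>\<^bsub>E\<^esub> x [^]\<^bsub>E\<^esub> k, \<psi> s \<otimes>\<^bsub>D\<^esub> y [^]\<^bsub>D\<^esub> k) | s (k::int). s \<in> S}"
  have memG': "(s \<otimes>\<^bsub>E\<^esub> x [^]\<^bsub>E\<^esub> k, \<psi> s \<otimes>\<^bsub>D\<^esub> y [^]\<^bsub>D\<^esub> k) \<in> \<Gamma>'" if "s \<in> S" for s and k :: int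
    unfolding \<Gamma>'_def using that by blast
  have domG': "Domain \<Gamma>' = {s \<otimes>\<^bsub>E\<^esub> x [^]\<^bsub>E\<^esub> k | s (k::int). s \<in> S}"
    unfolding \<Gamma>'_def by blast
  have sub: "\<Gamma> \<subseteq> \<Gamma>'"
  proof
    fix p assume p: "p \<in> \<Gamma>"
    obtain z u where zu: "p = (z,u)" by fastforce
    have z: "z \<in> S" using p zu unfolding S_def by blast
    have "(z \<otimes>\<^bsub>E\<^esub> x [^]\<^bsub>E\<^esub> (0::int), \<psi> z \<otimes>\<^bsub>D\<^esub> y [^]\<^bsub>D\<^esub> (0::int)) \<in> \<Gamma>'" by (rule memG'[OF z])
    then show "p \<in> \<Gamma>'" using zu \<psi>u[of z u] p SC[OF z] \<psi>c[OF z] by simp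
  qed
  have xin: "x \<in> Domain \<Gamma>'"
  proof -
    have "(\<one>\<^bsub>E\<^esub> \<otimes>\<^bsub>E\<^esub> x [^]\<^bsub>E\<^esub> (1::int), \<psi> \<one>\<^bsub>E\<^esub> \<otimes>\<^bsub>D\<^esub> y [^]\<^bsub>D\<^esub> (1::int)) \<in> \<Gamma>'"
      by (rule memG'[OF subgroup.one_closed[OF Sg]])
    then show ?thesis using x by (simp add: Domain.DomainI)
  qed
  have good': "good E D A \<phi> \<Gamma>'"
  proof -
    have c1: "\<Gamma>' \<subseteq> carrier E \<times> carrier D"
      unfolding \<Gamma>'_def using SC \<psi>c x y(1) by auto
    have c2: "subgroup (Domain \<Gamma>') E"
    proof (rule E.subgroupI)
      show "Domain \<Gamma>' \<subseteq> carrier E" using c1 by blast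
      show "Domain \<Gamma>' \<noteq> {}" using xin by blast
    next
      fix a assume "a \<in> Domain \<Gamma>'"
      then obtain s and k :: int where a: "a = s \<otimes>\<^bsub>E\<^esub> x [^]\<^bsub>E\<^esub> k" "s \<in> S" unfolding domG' by blast
      have "inv\<^bsub>E\<^esub> a = inv\<^bsub>E\<^esub> s \<otimes>\<^bsub>E\<^esub> x [^]\<^bsub>E\<^esub> (-k)"
        using a SC x by (simp add: E.inv_mult E.int_pow_neg)
      then show "inv\<^bsub>E\<^esub> a \<in> Domain \<Gamma>'" unfolding domG' using subgroup.m_inv_closed[OF Sg a(2)] by blast
    next
      fix a b assume "a \<in> Domain \<Gamma>'" "b \<in> Domain \<Gamma>'"
      then obtain s s' and k k' :: int where a: "a = s \<otimes>\<^bsub>E\<^esub> x [^]\<^bsub>E\<^esub> k" "s \<in> S"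
         and b: "b = s' \<otimes>\<^bsub>E\<^esub> x [^]\<^bsub>E\<^esub> k'" "s' \<in> S" unfolding domG' by blast
      have "a \<otimes>\<^bsub>E\<^esub> b = (s \<otimes>\<^bsub>E\<^esub> s') \<otimes>\<^bsub>E\<^esub> x [^]\<^bsub>E\<^esub> (k + k')"
        using a b SC x by (simp add: E.int_pow_mult E.m_ac)
      then show "a \<otimes>\<^bsub>E\<^esub> b \<in> Domain \<Gamma>'" unfolding domG' using subgroup.m_closed[OF Sg a(2) b(2)] by blast
    qed
    have c3: "A \<subseteq> Domain \<Gamma>'" using g sub unfolding good_def S_def by blast
    have c4: "\<forall>z u v. (z,u)\<in>\<Gamma>' \<longrightarrow> (z,v)\<in>\<Gamma>' \<longrightarrow> u = v"
    proof (intro allI impI)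
      fix z u v assume "(z,u)\<in>\<Gamma>'" "(z,v)\<in>\<Gamma>'"
      then obtain s s' and k k' :: int where "z = s \<otimes>\<^bsub>E\<^esub> x [^]\<^bsub>E\<^esub> k" "u = \<psi> s \<otimes>\<^bsub>D\<^esub> y [^]\<^bsub>D\<^esub> k" "s \<in> S"
        "z = s' \<otimes>\<^bsub>E\<^esub> x [^]\<^bsub>E\<^esub> k'" "v = \<psi> s' \<otimes>\<^bsub>D\<^esub> y [^]\<^bsub>D\<^esub> k'" "s' \<in> S"
        unfolding \<Gamma>'_def by blast
      then show "u = v" using wd by metis
    qed
    have c5: "\<forall>z u w v. (z,u)\<in>\<Gamma>' \<longrightarrow> (w,v)\<in>\<Gamma>' \<longrightarrow> (z \<otimes>\<^bsub>E\<^esub> w, u \<otimes>\<^bsub>D\<^esub> v) \<in> \<Gamma>'"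
    proof (intro allI impI)
      fix z u w v assume "(z,u)\<in>\<Gamma>'" "(w,v)\<in>\<Gamma>'"
      then obtain s s' and k k' :: int where a: "z = s \<otimes>\<^bsub>E\<^esub> x [^]\<^bsub>E\<^esub> k" "u = \<psi> s \<otimes>\<^bsub>D\<^esub> y [^]\<^bsub>D\<^esub> k" "s \<in> S"
        "w = s' \<otimes>\<^bsub>E\<^esub> x [^]\<^bsub>E\<^esub> k'" "v = \<psi> s' \<otimes>\<^bsub>D\<^esub> y [^]\<^bsub>D\<^esub> k'" "s' \<in> S"
        unfolding \<Gamma>'_def by blast
      have "z \<otimes>\<^bsub>E\<^esub> w = (s \<otimes>\<^bsub>E\<^esub> s') \<otimes>\<^bsub>E\<^esub> x [^]\<^bsub>E\<^esub> (k + k')"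
        using a SC x by (simp add: E.int_pow_mult E.m_ac)
      moreover have "u \<otimes>\<^bsub>D\<^esub> v = \<psi> (s \<otimes>\<^bsub>E\<^esub> s') \<otimes>\<^bsub>D\<^esub> y [^]\<^bsub>D\<^esub> (k + k')"
        using a \<psi>c y(1) \<psi>m[OF a(3) a(6)] by (simp add: D.int_pow_mult D.m_ac)
      ultimately show "(z \<otimes>\<^bsub>E\<^esub> w, u \<otimes>\<^bsub>D\<^esub> v) \<in> \<Gamma>'"
        using memG'[OF subgroup.m_closed[OF Sg a(3) a(6)]] by simp
    qed
    have c6: "\<forall>a\<in>A. (a, \<phi> a) \<in> \<Gamma>'" using g sub unfolding good_def by blast
    show ?thesis unfolding good_def using c1 c2 c3 c4 c5 c6 by blast
  qed
  show ?thesis using good' sub xin by blast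
qed

lemma baer:
  assumes E: "comm_group E" and D: "comm_group D" and dv: "divisible_group D"
    and A: "subgroup A E" and \<phi>c: "\<And>a. a \<in> A \<Longrightarrow> \<phi> a \<in> carrier D"
    and \<phi>m: "\<And>a b. a \<in> A \<Longrightarrow> b \<in> A \<Longrightarrow> \<phi> (a \<otimes>\<^bsub>E\<^esub> b) = \<phi> a \<otimes>\<^bsub>D\<^esub> \<phi> b"
  shows "\<exists>\<psi>. (\<forall>z\<in>carrier E. \<psi> z \<in> carrier D) \<and>
     (\<forall>z\<in>carrier E. \<forall>w\<in>carrier E. \<psi> (z \<otimes>\<^bsub>E\<^esub> w) = \<psi> z \<otimes>\<^bsub>D\<^esub> \<psi> w) \<and> (\<forall>a\<in>A. \<psi> a = \<phi> a)"
proof -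
  interpret E: comm_group E by fact
  interpret D: comm_group D by fact
  define GG where "GG = {\<Gamma>. good E D A \<phi> \<Gamma>}"
  define \<Gamma>0 where "\<Gamma>0 = (\<lambda>a. (a, \<phi> a)) ` A"
  have dom0: "Domain \<Gamma>0 = A" unfolding \<Gamma>0_def by force
  have AC: "A \<subseteq> carrier E" using subgroup.subset[OF A] .
  have g0: "good E D A \<phi> \<Gamma>0"
  proof -
    have "\<Gamma>0 \<subseteq> carrier E \<times> carrier D" using AC \<phi>c unfolding \<Gamma>0_def by blast
    moreover have "\<forall>x u v. (x,u)\<in>\<Gamma>0 \<longrightarrow> (x,v)\<in>\<Gamma>0 \<longrightarrow> u = v" unfolding \<Gamma>0_def by blast
    moreover have "\<forall>x u y v. (x,u)\<in>\<Gamma>0 \<longrightarrow> (y,v)\<in>\<Gamma>0 \<longrightarrow> (x \<otimes>\<^bsub>E\<^esub> y, u \<otimes>\<^bsub>D\<^esub> v) \<in> \<Gamma>0"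
    proof (intro allI impI)
      fix x u y v assume "(x,u)\<in>\<Gamma>0" "(y,v)\<in>\<Gamma>0"
      then have "x \<in> A" "y \<in> A" "u = \<phi> x" "v = \<phi> y" unfolding \<Gamma>0_def by auto
      then show "(x \<otimes>\<^bsub>E\<^esub> y, u \<otimes>\<^bsub>D\<^esub> v) \<in> \<Gamma>0"
        unfolding \<Gamma>0_def using \<phi>m subgroup.m_closed[OF A] by (simp add: image_iff)
    qed
    moreover have "\<forall>a\<in>A. (a, \<phi> a) \<in> \<Gamma>0" unfolding \<Gamma>0_def by blast
    ultimately show ?thesis unfolding good_def dom0 using A by blast
  qed
  have "\<exists>M\<in>GG. \<forall>Q\<in>GG. M \<subseteq> Q \<longrightarrow> Q = M"
  proof (rule subset_Zorn)
    fix C assume ch: "subset.chain GG C"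
    then have CG: "C \<subseteq> GG" and tot: "\<And>Q Y. Q \<in> C \<Longrightarrow> Y \<in> C \<Longrightarrow> Q \<subseteq> Y \<or> Y \<subseteq> Q"
      unfolding subset_chain_def by auto
    show "\<exists>U\<in>GG. \<forall>Q\<in>C. Q \<subseteq> U"
    proof (cases "C = {}")
      case True
      then show ?thesis using g0 unfolding GG_def by blast
    next
      case False
      then obtain Q0 where Q0: "Q0 \<in> C" by blast
      have gC: "\<And>Q. Q \<in> C \<Longrightarrow> good E D A \<phi> Q" using CG unfolding GG_def by blast
      have two: "\<And>p q. p \<in> \<Union>C \<Longrightarrow> q \<in> \<Union>C \<Longrightarrow> \<exists>Q\<in>C. p \<in> Q \<and> q \<in> Q"
      proof -
        fix p q assume "p \<in> \<Union>C" "q \<in> \<Union>C"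
        then obtain Q Y where "Q \<in> C" "Y \<in> C" "p \<in> Q" "q \<in> Y" by blast
        then show "\<exists>Q\<in>C. p \<in> Q \<and> q \<in> Q" using tot[of Q Y] by blast
      qed
      have u1: "\<Union>C \<subseteq> carrier E \<times> carrier D" using goodD1[OF gC] by blast
      have u2: "subgroup (Domain (\<Union>C)) E"
      proof (rule E.subgroupI)
        show "Domain (\<Union>C) \<subseteq> carrier E" using u1 by blast
        have "A \<subseteq> Domain Q0" using goodD3[OF gC[OF Q0]] .
        then have "\<one>\<^bsub>E\<^esub> \<in> Domain Q0" using subgroup.one_closed[OF A] by blast
        then show "Domain (\<Union>C) \<noteq> {}" using Q0 by blast
      next
        fix a assume "a \<in> Domain (\<Union>C)"
        then obtain Q where Q: "Q \<in> C" "a \<in> Domain Q" by blast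
        have "inv\<^bsub>E\<^esub> a \<in> Domain Q" using subgroup.m_inv_closed[OF goodD2[OF gC[OF Q(1)]] Q(2)] .
        then show "inv\<^bsub>E\<^esub> a \<in> Domain (\<Union>C)" using Q(1) by blast
      next
        fix a b assume "a \<in> Domain (\<Union>C)" "b \<in> Domain (\<Union>C)"
        then obtain u v where "(a,u) \<in> \<Union>C" "(b,v) \<in> \<Union>C" by blast
        then obtain Q where Q: "Q \<in> C" "(a,u) \<in> Q" "(b,v) \<in> Q" using two by blast
        have "(a \<otimes>\<^bsub>E\<^esub> b, u \<otimes>\<^bsub>D\<^esub> v) \<in> Q" using goodD5[OF gC[OF Q(1)] Q(2) Q(3)] .
        then show "a \<otimes>\<^bsub>E\<^esub> b \<in> Domain (\<Union>C)" using Q(1) by blast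
      qed
      have u3: "A \<subseteq> Domain (\<Union>C)" using goodD3[OF gC[OF Q0]] Q0 by blast
      have u4: "\<forall>x u v. (x,u)\<in>\<Union>C \<longrightarrow> (x,v)\<in>\<Union>C \<longrightarrow> u = v"
      proof (intro allI impI)
        fix x u v assume "(x,u)\<in>\<Union>C" "(x,v)\<in>\<Union>C"
        then obtain Q where Q: "Q \<in> C" "(x,u) \<in> Q" "(x,v) \<in> Q" using two by blast
        show "u = v" using goodD4[OF gC[OF Q(1)] Q(2) Q(3)] .
      qed
      have u5: "\<forall>x u y v. (x,u)\<in>\<Union>C \<longrightarrow> (y,v)\<in>\<Union>C \<longrightarrow> (x \<otimes>\<^bsub>E\<^esub> y, u \<otimes>\<^bsub>D\<^esub> v) \<in> \<Union>C"
      proof (intro allI impI)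
        fix x u y v assume "(x,u)\<in>\<Union>C" "(y,v)\<in>\<Union>C"
        then obtain Q where Q: "Q \<in> C" "(x,u) \<in> Q" "(y,v) \<in> Q" using two by blast
        have "(x \<otimes>\<^bsub>E\<^esub> y, u \<otimes>\<^bsub>D\<^esub> v) \<in> Q" using goodD5[OF gC[OF Q(1)] Q(2) Q(3)] .
        then show "(x \<otimes>\<^bsub>E\<^esub> y, u \<otimes>\<^bsub>D\<^esub> v) \<in> \<Union>C" using Q(1) by blast
      qed
      have u6: "\<forall>a\<in>A. (a, \<phi> a) \<in> \<Union>C" using goodD6[OF gC[OF Q0]] Q0 by blast
      have "good E D A \<phi> (\<Union>C)" unfolding good_def using u1 u2 u3 u4 u5 u6 by blast
      then show ?thesis unfolding GG_def by blast
    qed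
  qed
  then obtain M where M: "good E D A \<phi> M" and max: "\<And>Q. good E D A \<phi> Q \<Longrightarrow> M \<subseteq> Q \<Longrightarrow> Q = M"
    unfolding GG_def by blast
  have full: "\<And>z. z \<in> carrier E \<Longrightarrow> z \<in> Domain M"
  proof -
    fix z assume "z \<in> carrier E"
    then obtain Q where "good E D A \<phi> Q" "M \<subseteq> Q" "z \<in> Domain Q" using good_extend[OF E D dv M] by blast
    then show "z \<in> Domain M" using max by blast
  qed
  define \<psi> where "\<psi> z = (SOME u. (z,u) \<in> M)" for z
  have \<psi>M: "\<And>z. z \<in> carrier E \<Longrightarrow> (z, \<psi> z) \<in> M"
    unfolding \<psi>_def using full by (metis DomainE someI_ex)
  have \<psi>u: "\<And>z u. (z,u) \<in> M \<Longrightarrow> \<psi> z = u"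
  proof -
    fix z u assume zu: "(z,u) \<in> M"
    then have "z \<in> carrier E" using goodD1[OF M] by blast
    then show "\<psi> z = u" using goodD4[OF M \<psi>M zu] by blast
  qed
  have r1: "\<forall>z\<in>carrier E. \<psi> z \<in> carrier D" using \<psi>M goodD1[OF M] by blast
  have r2: "\<forall>z\<in>carrier E. \<forall>w\<in>carrier E. \<psi> (z \<otimes>\<^bsub>E\<^esub> w) = \<psi> z \<otimes>\<^bsub>D\<^esub> \<psi> w"
  proof (intro ballI)
    fix z w assume "z \<in> carrier E" "w \<in> carrier E"
    then have "(z \<otimes>\<^bsub>E\<^esub> w, \<psi> z \<otimes>\<^bsub>D\<^esub> \<psi> w) \<in> M" using goodD5[OF M \<psi>M \<psi>M] by blast
    then show "\<psi> (z \<otimes>\<^bsub>E\<^esub> w) = \<psi> z \<otimes>\<^bsub>D\<^esub> \<psi> w" by (rule \<psi>u)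
  qed
  have r3: "\<forall>a\<in>A. \<psi> a = \<phi> a" using \<psi>u goodD6[OF M] by blast
  show ?thesis using r1 r2 r3 by blast
qed



section \<open> Generic facts on cohomologous cocycles \<close>

lemma coh_refl:
  assumes D: "comm_group D" and f: "f \<in> two_cocycles G D"
  shows "(f, f) \<in> cohomologous G D"
proof -
  interpret D: comm_group D by fact
  have "\<forall> x\<in>carrier G. \<forall> y\<in>carrier G. f (x, y) = f (x, y) \<otimes>\<^bsub>D\<^esub> ((\<lambda>_. \<one>\<^bsub>D\<^esub>) x \<otimes>\<^bsub>D\<^esub> (\<lambda>_. \<one>\<^bsub>D\<^esub>) y \<otimes>\<^bsub>D\<^esub> inv\<^bsub>D\<^esub> ((\<lambda>_. \<one>\<^bsub>D\<^esub>) (x \<otimes>\<^bsub>G\<^esub> y)))"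
  proof (intro ballI)
    fix x y assume "x \<in> carrier G" "y \<in> carrier G"
    then have "f (x,y) \<in> carrier D" using f unfolding two_cocycles_def by auto
    then show "f (x, y) = f (x, y) \<otimes>\<^bsub>D\<^esub> ((\<lambda>_. \<one>\<^bsub>D\<^esub>) x \<otimes>\<^bsub>D\<^esub> (\<lambda>_. \<one>\<^bsub>D\<^esub>) y \<otimes>\<^bsub>D\<^esub> inv\<^bsub>D\<^esub> ((\<lambda>_. \<one>\<^bsub>D\<^esub>) (x \<otimes>\<^bsub>G\<^esub> y)))" by simp
  qed
  moreover have "(\<lambda>_. \<one>\<^bsub>D\<^esub>) \<in> carrier G \<rightarrow> carrier D" by simp
  ultimately have "\<exists> g \<in> carrier G \<rightarrow> carrier D. \<forall> x\<in>carrier G. \<forall> y\<in>carrier G. f (x, y) = f (x, y) \<otimes>\<^bsub>D\<^esub> (g x \<otimes>\<^bsub>D\<^esub> g y \<otimes>\<^bsub>D\<^esub> inv\<^bsub>D\<^esub> (g (x \<otimes>\<^bsub>G\<^esub> y)))"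
    by (intro bexI[of _ "\<lambda>_. \<one>\<^bsub>D\<^esub>"]) simp_all
  then show ?thesis using f by (simp add: cohomologous_def)
qed

lemma coh_sym:
  assumes G: "monoid G" and D: "comm_group D" and r: "(f, f') \<in> cohomologous G D"
  shows "(f', f) \<in> cohomologous G D"
proof -
  interpret D: comm_group D by fact
  interpret G: monoid G by fact
  from r obtain g where f: "f \<in> two_cocycles G D" and f': "f' \<in> two_cocycles G D" and g: "g \<in> carrier G \<rightarrow> carrier D"
    and eq: "\<And> x y. x\<in>carrier G \<Longrightarrow> y\<in>carrier G \<Longrightarrow> f (x, y) = f' (x, y) \<otimes>\<^bsub>D\<^esub> (g x \<otimes>\<^bsub>D\<^esub> g y \<otimes>\<^bsub>D\<^esub> inv\<^bsub>D\<^esub> (g (x \<otimes>\<^bsub>G\<^esub> y)))"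
    unfolding cohomologous_def by auto
  define h where "h x = inv\<^bsub>D\<^esub> (g x)" for x
  have h: "h \<in> carrier G \<rightarrow> carrier D" using g unfolding h_def by auto
  have "f' (x, y) = f (x, y) \<otimes>\<^bsub>D\<^esub> (h x \<otimes>\<^bsub>D\<^esub> h y \<otimes>\<^bsub>D\<^esub> inv\<^bsub>D\<^esub> (h (x \<otimes>\<^bsub>G\<^esub> y)))" if x: "x\<in>carrier G" and y: "y\<in>carrier G" for x y
  proof -
    have c: "f' (x,y) \<in> carrier D" "g x \<in> carrier D" "g y \<in> carrier D" "g (x \<otimes>\<^bsub>G\<^esub> y) \<in> carrier D"
      using f' g x y unfolding two_cocycles_def by auto
    have "f (x, y) \<otimes>\<^bsub>D\<^esub> (h x \<otimes>\<^bsub>D\<^esub> h y \<otimes>\<^bsub>D\<^esub> inv\<^bsub>D\<^esub> (h (x \<otimes>\<^bsub>G\<^esub> y)))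
        = f' (x, y) \<otimes>\<^bsub>D\<^esub> ((g x \<otimes>\<^bsub>D\<^esub> inv\<^bsub>D\<^esub> (g x)) \<otimes>\<^bsub>D\<^esub> (g y \<otimes>\<^bsub>D\<^esub> inv\<^bsub>D\<^esub> (g y)) \<otimes>\<^bsub>D\<^esub> (inv\<^bsub>D\<^esub> (g (x \<otimes>\<^bsub>G\<^esub> y)) \<otimes>\<^bsub>D\<^esub> g (x \<otimes>\<^bsub>G\<^esub> y)))"
      unfolding eq[OF x y] h_def using c by (simp only: D.inv_inv c) (simp only: D.m_ac c D.m_closed D.inv_closed)
    also have "\<dots> = f' (x, y)" using c by (simp only: D.r_inv D.l_inv D.one_closed D.r_one D.l_one D.m_closed D.inv_closed)
    finally show ?thesis by simp
  qed
  then have "\<exists> g \<in> carrier G \<rightarrow> carrier D. \<forall> x\<in>carrier G. \<forall> y\<in>carrier G. f' (x, y) = f (x, y) \<otimes>\<^bsub>D\<^esub> (g x \<otimes>\<^bsub>D\<^esub> g y \<otimes>\<^bsub>D\<^esub> inv\<^bsub>D\<^esub> (g (x \<otimes>\<^bsub>G\<^esub> y)))"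
    using h by blast
  then show ?thesis using f f' by (simp add: cohomologous_def)
qed

lemma coh_trans:
  assumes G: "monoid G" and D: "comm_group D" and r: "(f1, f2) \<in> cohomologous G D"
    and r2: "(f2, f3) \<in> cohomologous G D"
  shows "(f1, f3) \<in> cohomologous G D"
proof -
  interpret D: comm_group D by fact
  interpret G: monoid G by fact
  from r obtain g where f1: "f1 \<in> two_cocycles G D" and g: "g \<in> carrier G \<rightarrow> carrier D"
    and eq: "\<And> x y. x\<in>carrier G \<Longrightarrow> y\<in>carrier G \<Longrightarrow> f1 (x, y) = f2 (x, y) \<otimes>\<^bsub>D\<^esub> (g x \<otimes>\<^bsub>D\<^esub> g y \<otimes>\<^bsub>D\<^esub> inv\<^bsub>D\<^esub> (g (x \<otimes>\<^bsub>G\<^esub> y)))"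
    unfolding cohomologous_def by auto
  from r2 obtain h where f3: "f3 \<in> two_cocycles G D" and h: "h \<in> carrier G \<rightarrow> carrier D"
    and eq2: "\<And> x y. x\<in>carrier G \<Longrightarrow> y\<in>carrier G \<Longrightarrow> f2 (x, y) = f3 (x, y) \<otimes>\<^bsub>D\<^esub> (h x \<otimes>\<^bsub>D\<^esub> h y \<otimes>\<^bsub>D\<^esub> inv\<^bsub>D\<^esub> (h (x \<otimes>\<^bsub>G\<^esub> y)))"
    unfolding cohomologous_def by auto
  define k where "k x = g x \<otimes>\<^bsub>D\<^esub> h x" for x
  have k: "k \<in> carrier G \<rightarrow> carrier D" using g h unfolding k_def by auto
  have "f1 (x, y) = f3 (x, y) \<otimes>\<^bsub>D\<^esub> (k x \<otimes>\<^bsub>D\<^esub> k y \<otimes>\<^bsub>D\<^esub> inv\<^bsub>D\<^esub> (k (x \<otimes>\<^bsub>G\<^esub> y)))" if x: "x\<in>carrier G" and y: "y\<in>carrier G" for x y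
  proof -
    have c: "f3 (x,y) \<in> carrier D" "g x \<in> carrier D" "g y \<in> carrier D" "g (x \<otimes>\<^bsub>G\<^esub> y) \<in> carrier D"
       "h x \<in> carrier D" "h y \<in> carrier D" "h (x \<otimes>\<^bsub>G\<^esub> y) \<in> carrier D"
      using f3 g h x y unfolding two_cocycles_def by auto
    show ?thesis
      unfolding eq[OF x y] eq2[OF x y] k_def using c by (simp add: D.m_ac D.inv_mult)
  qed
  then have "\<exists> g \<in> carrier G \<rightarrow> carrier D. \<forall> x\<in>carrier G. \<forall> y\<in>carrier G. f1 (x, y) = f3 (x, y) \<otimes>\<^bsub>D\<^esub> (g x \<otimes>\<^bsub>D\<^esub> g y \<otimes>\<^bsub>D\<^esub> inv\<^bsub>D\<^esub> (g (x \<otimes>\<^bsub>G\<^esub> y)))"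
    using k by blast
  then show ?thesis using f1 f3 by (simp add: cohomologous_def)
qed

lemma coh_equiv:
  assumes G: "monoid G" and D: "comm_group D"
  shows "equiv (two_cocycles G D) (cohomologous G D)"
proof (rule equivI)
  show "refl_on (two_cocycles G D) (cohomologous G D)"
  proof -
    have "cohomologous G D \<subseteq> two_cocycles G D \<times> two_cocycles G D" unfolding cohomologous_def by (rule subsetI, clarsimp)
    then show ?thesis unfolding refl_on_def using coh_refl[OF D] by blast
  qed
  show "sym (cohomologous G D)" unfolding sym_def using coh_sym[OF G D] by blast
  show "trans (cohomologous G D)" unfolding trans_def using coh_trans[OF G D] by blast
  show "cohomologous G D \<subseteq> two_cocycles G D \<times> two_cocycles G D" unfolding cohomologous_def by (rule subsetI, clarsimp)
qed

section \<open> Inflation \<close>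

lemma quot_facts:
  assumes G: "group G" and N: "B \<lhd> G"
  shows "\<And> x. x \<in> carrier G \<Longrightarrow> B #>\<^bsub>G\<^esub> x \<in> carrier (G Mod B)"
    and "\<And> x y. x \<in> carrier G \<Longrightarrow> y \<in> carrier G \<Longrightarrow> (B #>\<^bsub>G\<^esub> x) \<otimes>\<^bsub>G Mod B\<^esub> (B #>\<^bsub>G\<^esub> y) = B #>\<^bsub>G\<^esub> (x \<otimes>\<^bsub>G\<^esub> y)"
    and "\<And> U. U \<in> carrier (G Mod B) \<Longrightarrow> \<exists> x \<in> carrier G. U = B #>\<^bsub>G\<^esub> x"
proof -
  interpret N: normal B G by fact
  show "\<And> x. x \<in> carrier G \<Longrightarrow> B #>\<^bsub>G\<^esub> x \<in> carrier (G Mod B)" by (simp add: carrier_FactGroup)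
  show "\<And> x y. x \<in> carrier G \<Longrightarrow> y \<in> carrier G \<Longrightarrow> (B #>\<^bsub>G\<^esub> x) \<otimes>\<^bsub>G Mod B\<^esub> (B #>\<^bsub>G\<^esub> y) = B #>\<^bsub>G\<^esub> (x \<otimes>\<^bsub>G\<^esub> y)"
    by (simp add: N.rcos_sum)
  show "\<And> U. U \<in> carrier (G Mod B) \<Longrightarrow> \<exists> x \<in> carrier G. U = B #>\<^bsub>G\<^esub> x" by (auto simp add: carrier_FactGroup)
qed

lemma inflate_apply:
  "x \<in> carrier G \<Longrightarrow> y \<in> carrier G \<Longrightarrow> inflate_cocycle G B f (x, y) = f (B #>\<^bsub>G\<^esub> x, B #>\<^bsub>G\<^esub> y)"
  unfolding inflate_cocycle_def by simp

lemma inflate_two_cocycle: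
  assumes G: "group G" and D: "comm_group D" and N: "B \<lhd> G" and f: "f \<in> two_cocycles (G Mod B) D"
  shows "inflate_cocycle G B f \<in> two_cocycles G D"
proof -
  interpret G: group G by fact
  interpret D: comm_group D by fact
  note q = quot_facts[OF G N]
  have "inflate_cocycle G B f \<in> (carrier G \<times> carrier G) \<rightarrow>\<^sub>E carrier D"
    unfolding inflate_cocycle_def using f q(1) unfolding two_cocycles_def by (auto simp: PiE_iff)
  moreover have "\<forall> x\<in>carrier G. \<forall> y\<in>carrier G. \<forall> z\<in>carrier G.
        inflate_cocycle G B f (x, y) \<otimes>\<^bsub>D\<^esub> inflate_cocycle G B f (x \<otimes>\<^bsub>G\<^esub> y, z) = inflate_cocycle G B f (y, z) \<otimes>\<^bsub>D\<^esub> inflate_cocycle G B f (x, y \<otimes>\<^bsub>G\<^esub> z)"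
  proof (intro ballI)
    fix x y z assume xyz: "x \<in> carrier G" "y \<in> carrier G" "z \<in> carrier G"
    have "f (B #>\<^bsub>G\<^esub> x, B #>\<^bsub>G\<^esub> y) \<otimes>\<^bsub>D\<^esub> f ((B #>\<^bsub>G\<^esub> x) \<otimes>\<^bsub>G Mod B\<^esub> (B #>\<^bsub>G\<^esub> y), B #>\<^bsub>G\<^esub> z)
        = f (B #>\<^bsub>G\<^esub> y, B #>\<^bsub>G\<^esub> z) \<otimes>\<^bsub>D\<^esub> f (B #>\<^bsub>G\<^esub> x, (B #>\<^bsub>G\<^esub> y) \<otimes>\<^bsub>G Mod B\<^esub> (B #>\<^bsub>G\<^esub> z))"
      using f q(1) xyz unfolding two_cocycles_def by blast
    then show "inflate_cocycle G B f (x, y) \<otimes>\<^bsub>D\<^esub> inflate_cocycle G B f (x \<otimes>\<^bsub>G\<^esub> y, z) = inflate_cocycle G B f (y, z) \<otimes>\<^bsub>D\<^esub> inflate_cocycle G B f (x, y \<otimes>\<^bsub>G\<^esub> z)"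
      using xyz q(2) by (simp add: inflate_apply)
  qed
  ultimately show ?thesis unfolding two_cocycles_def by blast
qed

lemma inflate_coh:
  assumes G: "group G" and D: "comm_group D" and N: "B \<lhd> G" and r: "(f1, f2) \<in> cohomologous (G Mod B) D"
  shows "(inflate_cocycle G B f1, inflate_cocycle G B f2) \<in> cohomologous G D"
proof -
  interpret G: group G by fact
  interpret D: comm_group D by fact
  note q = quot_facts[OF G N]
  from r obtain g where f1: "f1 \<in> two_cocycles (G Mod B) D" and f2: "f2 \<in> two_cocycles (G Mod B) D"
    and g: "g \<in> carrier (G Mod B) \<rightarrow> carrier D"
    and eq: "\<And> U V. U\<in> carrier (G Mod B) \<Longrightarrow> V\<in> carrier (G Mod B) \<Longrightarrow> f1 (U, V) = f2 (U, V) \<otimes>\<^bsub>D\<^esub> (g U \<otimes>\<^bsub>D\<^esub> g V \<otimes>\<^bsub>D\<^esub> inv\<^bsub>D\<^esub> (g (U \<otimes>\<^bsub>G Mod B\<^esub> V)))"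
    unfolding cohomologous_def by auto
  define h where "h x = g (B #>\<^bsub>G\<^esub> x)" for x
  have h: "h \<in> carrier G \<rightarrow> carrier D" using g q(1) unfolding h_def by auto
  have "inflate_cocycle G B f1 (x, y) = inflate_cocycle G B f2 (x, y) \<otimes>\<^bsub>D\<^esub> (h x \<otimes>\<^bsub>D\<^esub> h y \<otimes>\<^bsub>D\<^esub> inv\<^bsub>D\<^esub> (h (x \<otimes>\<^bsub>G\<^esub> y)))"
    if x: "x\<in>carrier G" and y: "y\<in>carrier G" for x y
    using eq[OF q(1)[OF x] q(1)[OF y]] q(2)[OF x y] x y unfolding h_def by (simp add: inflate_apply)
  then have "\<exists> g \<in> carrier G \<rightarrow> carrier D. \<forall> x\<in>carrier G. \<forall> y\<in>carrier G. inflate_cocycle G B f1 (x, y) = inflate_cocycle G B f2 (x, y) \<otimes>\<^bsub>D\<^esub> (g x \<otimes>\<^bsub>D\<^esub> g y \<otimes>\<^bsub>D\<^esub> inv\<^bsub>D\<^esub> (g (x \<otimes>\<^bsub>G\<^esub> y)))"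
    using h by blast
  then show ?thesis using inflate_two_cocycle[OF G D N f1] inflate_two_cocycle[OF G D N f2] by (simp add: cohomologous_def)
qed

lemma cg_div_lemma:
  assumes D: "comm_group D" and c: "A \<in> carrier D" "B \<in> carrier D" "a1 \<in> carrier D" "a2 \<in> carrier D" "b1 \<in> carrier D" "b2 \<in> carrier D"
    and e: "A \<otimes>\<^bsub>D\<^esub> b1 \<otimes>\<^bsub>D\<^esub> b2 = a1 \<otimes>\<^bsub>D\<^esub> a2 \<otimes>\<^bsub>D\<^esub> B"
  shows "A \<otimes>\<^bsub>D\<^esub> inv\<^bsub>D\<^esub> B = (a1 \<otimes>\<^bsub>D\<^esub> inv\<^bsub>D\<^esub> b1) \<otimes>\<^bsub>D\<^esub> (a2 \<otimes>\<^bsub>D\<^esub> inv\<^bsub>D\<^esub> b2)"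
proof -
  interpret D: comm_group D by fact
  have "(A \<otimes>\<^bsub>D\<^esub> inv\<^bsub>D\<^esub> B) \<otimes>\<^bsub>D\<^esub> (B \<otimes>\<^bsub>D\<^esub> b1 \<otimes>\<^bsub>D\<^esub> b2) = (A \<otimes>\<^bsub>D\<^esub> b1 \<otimes>\<^bsub>D\<^esub> b2) \<otimes>\<^bsub>D\<^esub> (inv\<^bsub>D\<^esub> B \<otimes>\<^bsub>D\<^esub> B)"
    using c by (simp only: D.m_ac D.m_closed D.inv_closed)
  also have "\<dots> = A \<otimes>\<^bsub>D\<^esub> b1 \<otimes>\<^bsub>D\<^esub> b2" using c by simp
  also have "\<dots> = a1 \<otimes>\<^bsub>D\<^esub> a2 \<otimes>\<^bsub>D\<^esub> B" by (rule e)
  also have "\<dots> = (a1 \<otimes>\<^bsub>D\<^esub> a2 \<otimes>\<^bsub>D\<^esub> B) \<otimes>\<^bsub>D\<^esub> (inv\<^bsub>D\<^esub> b1 \<otimes>\<^bsub>D\<^esub> b1) \<otimes>\<^bsub>D\<^esub> (inv\<^bsub>D\<^esub> b2 \<otimes>\<^bsub>D\<^esub> b2)"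
    using c by simp
  also have "\<dots> = ((a1 \<otimes>\<^bsub>D\<^esub> inv\<^bsub>D\<^esub> b1) \<otimes>\<^bsub>D\<^esub> (a2 \<otimes>\<^bsub>D\<^esub> inv\<^bsub>D\<^esub> b2)) \<otimes>\<^bsub>D\<^esub> (B \<otimes>\<^bsub>D\<^esub> b1 \<otimes>\<^bsub>D\<^esub> b2)"
    using c by (simp only: D.m_ac D.m_closed D.inv_closed)
  finally show ?thesis using c by simp
qed

locale cocyc = G: group G + D: comm_group D
  for G :: "('a, 'b) monoid_scheme" and D :: "('d, 'e) monoid_scheme" +
  fixes f :: "'a \<times> 'a \<Rightarrow> 'd"
  assumes fcoc: "f \<in> two_cocycles G D"
begin

lemma fc [simp]: "x \<in> carrier G \<Longrightarrow> y \<in> carrier G \<Longrightarrow> f (x, y) \<in> carrier D"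
  using fcoc unfolding two_cocycles_def by auto

lemma coc: "x \<in> carrier G \<Longrightarrow> y \<in> carrier G \<Longrightarrow> z \<in> carrier G \<Longrightarrow> f (x, y) \<otimes>\<^bsub>D\<^esub> f (x \<otimes>\<^bsub>G\<^esub> y, z) = f (y, z) \<otimes>\<^bsub>D\<^esub> f (x, y \<otimes>\<^bsub>G\<^esub> z)"
  using fcoc unfolding two_cocycles_def by blast

definition cc where "cc = f (\<one>\<^bsub>G\<^esub>, \<one>\<^bsub>G\<^esub>)"

lemma cc_c [simp]: "cc \<in> carrier D" unfolding cc_def by simp

lemma f_x1_1z: assumes "x \<in> carrier G" "z \<in> carrier G" shows "f (x, \<one>\<^bsub>G\<^esub>) = f (\<one>\<^bsub>G\<^esub>, z)"
proof -
  have "f (x, \<one>\<^bsub>G\<^esub>) \<otimes>\<^bsub>D\<^esub> f (x, z) = f (\<one>\<^bsub>G\<^esub>, z) \<otimes>\<^bsub>D\<^esub> f (x, z)" using coc[of x "\<one>\<^bsub>G\<^esub>" z] assms by simp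
  then show ?thesis using assms by simp
qed

lemma f_x1: "x \<in> carrier G \<Longrightarrow> f (x, \<one>\<^bsub>G\<^esub>) = cc" unfolding cc_def using f_x1_1z by simp
lemma f_1x: "x \<in> carrier G \<Longrightarrow> f (\<one>\<^bsub>G\<^esub>, x) = cc" unfolding cc_def using f_x1_1z by simp

lemma bilin:
  assumes x: "x1 \<in> carrier G" "x2 \<in> carrier G" "y \<in> carrier G" and cm: "x1 \<otimes>\<^bsub>G\<^esub> y = y \<otimes>\<^bsub>G\<^esub> x1" "x2 \<otimes>\<^bsub>G\<^esub> y = y \<otimes>\<^bsub>G\<^esub> x2"
  shows "f (x1 \<otimes>\<^bsub>G\<^esub> x2, y) \<otimes>\<^bsub>D\<^esub> f (y, x1) \<otimes>\<^bsub>D\<^esub> f (y, x2) = f (x1, y) \<otimes>\<^bsub>D\<^esub> f (x2, y) \<otimes>\<^bsub>D\<^esub> f (y, x1 \<otimes>\<^bsub>G\<^esub> x2)"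
proof -
  have e1: "f (x1, x2) \<otimes>\<^bsub>D\<^esub> f (x1 \<otimes>\<^bsub>G\<^esub> x2, y) = f (x2, y) \<otimes>\<^bsub>D\<^esub> f (x1, y \<otimes>\<^bsub>G\<^esub> x2)"
    using coc[of x1 x2 y] x cm by (simp add: G.m_assoc)
  have e2: "f (x1, y) \<otimes>\<^bsub>D\<^esub> f (x1 \<otimes>\<^bsub>G\<^esub> y, x2) = f (y, x2) \<otimes>\<^bsub>D\<^esub> f (x1, y \<otimes>\<^bsub>G\<^esub> x2)"
    using coc[of x1 y x2] x by simp
  have e3: "f (y, x1) \<otimes>\<^bsub>D\<^esub> f (x1 \<otimes>\<^bsub>G\<^esub> y, x2) = f (x1, x2) \<otimes>\<^bsub>D\<^esub> f (y, x1 \<otimes>\<^bsub>G\<^esub> x2)"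
    using coc[of y x1 x2] x cm by (simp add: G.m_assoc)
  define K where "K = f (x1, x2) \<otimes>\<^bsub>D\<^esub> f (x1 \<otimes>\<^bsub>G\<^esub> y, x2) \<otimes>\<^bsub>D\<^esub> f (x1, y \<otimes>\<^bsub>G\<^esub> x2)"
  have Kc: "K \<in> carrier D" unfolding K_def using x by simp
  have "f (x1 \<otimes>\<^bsub>G\<^esub> x2, y) \<otimes>\<^bsub>D\<^esub> f (y, x1) \<otimes>\<^bsub>D\<^esub> f (y, x2) \<otimes>\<^bsub>D\<^esub> K
      = (f (x1, x2) \<otimes>\<^bsub>D\<^esub> f (x1 \<otimes>\<^bsub>G\<^esub> x2, y)) \<otimes>\<^bsub>D\<^esub> (f (y, x1) \<otimes>\<^bsub>D\<^esub> f (x1 \<otimes>\<^bsub>G\<^esub> y, x2)) \<otimes>\<^bsub>D\<^esub> (f (y, x2) \<otimes>\<^bsub>D\<^esub> f (x1, y \<otimes>\<^bsub>G\<^esub> x2))"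
    unfolding K_def using x by (simp only: D.m_ac fc G.m_closed D.m_closed)
  also have "\<dots> = (f (x2, y) \<otimes>\<^bsub>D\<^esub> f (x1, y \<otimes>\<^bsub>G\<^esub> x2)) \<otimes>\<^bsub>D\<^esub> (f (x1, x2) \<otimes>\<^bsub>D\<^esub> f (y, x1 \<otimes>\<^bsub>G\<^esub> x2)) \<otimes>\<^bsub>D\<^esub> (f (x1, y) \<otimes>\<^bsub>D\<^esub> f (x1 \<otimes>\<^bsub>G\<^esub> y, x2))"
    by (simp only: e1 e3 e2[symmetric])
  also have "\<dots> = f (x1, y) \<otimes>\<^bsub>D\<^esub> f (x2, y) \<otimes>\<^bsub>D\<^esub> f (y, x1 \<otimes>\<^bsub>G\<^esub> x2) \<otimes>\<^bsub>D\<^esub> K"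
    unfolding K_def using x by (simp only: D.m_ac fc G.m_closed D.m_closed)
  finally show ?thesis using Kc x by simp
qed

definition chi where "chi y x = f (x, y) \<otimes>\<^bsub>D\<^esub> inv\<^bsub>D\<^esub> (f (y, x))"

lemma chi_c [simp]: "x \<in> carrier G \<Longrightarrow> y \<in> carrier G \<Longrightarrow> chi y x \<in> carrier D" unfolding chi_def by simp

lemma chi_mult:
  assumes x: "x1 \<in> carrier G" "x2 \<in> carrier G" "y \<in> carrier G" and cm: "x1 \<otimes>\<^bsub>G\<^esub> y = y \<otimes>\<^bsub>G\<^esub> x1" "x2 \<otimes>\<^bsub>G\<^esub> y = y \<otimes>\<^bsub>G\<^esub> x2"
  shows "chi y (x1 \<otimes>\<^bsub>G\<^esub> x2) = chi y x1 \<otimes>\<^bsub>D\<^esub> chi y x2"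
  unfolding chi_def using cg_div_lemma[OF D.comm_group_axioms _ _ _ _ _ _ bilin[OF x cm]] x by simp

lemma chi_one_iff: "x \<in> carrier G \<Longrightarrow> y \<in> carrier G \<Longrightarrow> chi y x = \<one>\<^bsub>D\<^esub> \<longleftrightarrow> f (x, y) = f (y, x)"
proof -
  assume "x \<in> carrier G" "y \<in> carrier G"
  then have c: "f (x, y) \<in> carrier D" "f (y, x) \<in> carrier D" by auto
  have "f (x, y) \<otimes>\<^bsub>D\<^esub> inv\<^bsub>D\<^esub> (f (y, x)) = \<one>\<^bsub>D\<^esub> \<longleftrightarrow> f (x, y) \<otimes>\<^bsub>D\<^esub> inv\<^bsub>D\<^esub> (f (y, x)) \<otimes>\<^bsub>D\<^esub> f (y, x) = \<one>\<^bsub>D\<^esub> \<otimes>\<^bsub>D\<^esub> f (y, x)"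
    using c by (metis D.inv_closed D.m_closed D.one_closed D.right_cancel)
  also have "\<dots> \<longleftrightarrow> f (x, y) = f (y, x)" using c by (simp add: D.m_assoc)
  finally show ?thesis unfolding chi_def .
qed

lemma derived_sym:
  assumes S: "subgroup S G" and y: "y \<in> carrier G" and cm: "\<And> s. s \<in> S \<Longrightarrow> s \<otimes>\<^bsub>G\<^esub> y = y \<otimes>\<^bsub>G\<^esub> s"
    and z: "z \<in> derived G S"
  shows "f (z, y) = f (y, z)"
proof -
  have SC: "\<And> s. s \<in> S \<Longrightarrow> s \<in> carrier G" using subgroup.subset[OF S] by blast
  have hm: "\<And> a b. a \<in> S \<Longrightarrow> b \<in> S \<Longrightarrow> chi y (a \<otimes>\<^bsub>G\<^esub> b) = chi y a \<otimes>\<^bsub>D\<^esub> chi y b"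
    using chi_mult SC y cm by blast
  have hc: "\<And> a. a \<in> S \<Longrightarrow> chi y a \<in> carrier D" using SC y by simp
  have pw: "\<And> a (m::int). a \<in> S \<Longrightarrow> chi y (a [^]\<^bsub>G\<^esub> m) = chi y a [^]\<^bsub>D\<^esub> m"
    by (rule hom_int_pow_aux[OF G.is_group D.is_group S hc hm])
  have cinv: "\<And> a. a \<in> S \<Longrightarrow> chi y (inv\<^bsub>G\<^esub> a) = inv\<^bsub>D\<^esub> (chi y a)"
  proof -
    fix a assume a: "a \<in> S"
    show "chi y (inv\<^bsub>G\<^esub> a) = inv\<^bsub>D\<^esub> (chi y a)"
      using pw[OF a, of "-1"] G.int_pow_neg[OF SC[OF a], of 1] D.int_pow_neg[OF hc[OF a], of 1] SC[OF a] hc[OF a] by simp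
  qed
  define Kr where "Kr = {x \<in> S. chi y x = \<one>\<^bsub>D\<^esub>}"
  have Krs: "subgroup Kr G"
  proof (rule G.subgroupI)
    show "Kr \<subseteq> carrier G" unfolding Kr_def using SC by blast
    have "chi y \<one>\<^bsub>G\<^esub> = \<one>\<^bsub>D\<^esub>" using pw[OF subgroup.one_closed[OF S], of 0] by simp
    then show "Kr \<noteq> {}" unfolding Kr_def using subgroup.one_closed[OF S] by blast
  next
    fix a assume "a \<in> Kr"
    then show "inv\<^bsub>G\<^esub> a \<in> Kr" unfolding Kr_def using cinv subgroup.m_inv_closed[OF S] by simp
  next
    fix a b assume "a \<in> Kr" "b \<in> Kr"
    then show "a \<otimes>\<^bsub>G\<^esub> b \<in> Kr" unfolding Kr_def using hm subgroup.m_closed[OF S] by simp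
  qed
  have "derived_set G S \<subseteq> Kr"
  proof
    fix w assume "w \<in> derived_set G S"
    then obtain h1 h2 where h: "h1 \<in> S" "h2 \<in> S" and w: "w = h1 \<otimes>\<^bsub>G\<^esub> h2 \<otimes>\<^bsub>G\<^esub> inv\<^bsub>G\<^esub> h1 \<otimes>\<^bsub>G\<^esub> inv\<^bsub>G\<^esub> h2" by blast
    have ih: "inv\<^bsub>G\<^esub> h1 \<in> S" "inv\<^bsub>G\<^esub> h2 \<in> S" using h subgroup.m_inv_closed[OF S] by auto
    have wS: "w \<in> S" unfolding w using h ih subgroup.m_closed[OF S] by metis
    have "chi y w = chi y h1 \<otimes>\<^bsub>D\<^esub> chi y h2 \<otimes>\<^bsub>D\<^esub> inv\<^bsub>D\<^esub> (chi y h1) \<otimes>\<^bsub>D\<^esub> inv\<^bsub>D\<^esub> (chi y h2)"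
      unfolding w using hm h ih subgroup.m_closed[OF S] cinv by metis
    also have "\<dots> = (chi y h1 \<otimes>\<^bsub>D\<^esub> inv\<^bsub>D\<^esub> (chi y h1)) \<otimes>\<^bsub>D\<^esub> (chi y h2 \<otimes>\<^bsub>D\<^esub> inv\<^bsub>D\<^esub> (chi y h2))"
      using hc h by (simp only: D.m_ac D.m_closed D.inv_closed)
    also have "\<dots> = \<one>\<^bsub>D\<^esub>" using hc h by simp
    finally show "w \<in> Kr" unfolding Kr_def using wS by blast
  qed
  then have "derived G S \<subseteq> Kr" unfolding derived_def by (rule G.generate_subgroup_incl[OF _ Krs])
  then have "chi y z = \<one>\<^bsub>D\<^esub>" "z \<in> carrier G" using z SC unfolding Kr_def by auto
  then show ?thesis using chi_one_iff y by blast
qed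

end


locale setting = cocyc +
  fixes H K B :: "'a set"
  assumes nH: "H \<lhd> G" and nK: "K \<lhd> G" and HK: "H <#>\<^bsub>G\<^esub> K = carrier G"
    and cHK: "\<forall> h\<in> H. \<forall> k\<in> K. h \<otimes>\<^bsub>G\<^esub> k = k \<otimes>\<^bsub>G\<^esub> h"
    and dv: "divisible_group D"
    and sB: "subgroup B G" and Bsub: "B \<subseteq> derived G H \<inter> derived G K"
begin

lemma sH: "subgroup H G" using nH normal_imp_subgroup by blast
lemma sK: "subgroup K G" using nK normal_imp_subgroup by blast

lemma BH: "B \<subseteq> H" using Bsub G.derived_incl[OF subset_refl sH] by blast
lemma BK: "B \<subseteq> K" using Bsub G.derived_incl[OF subset_refl sK] by blast
lemma HC: "h \<in> H \<Longrightarrow> h \<in> carrier G" using subgroup.subset[OF sH] by blast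
lemma KC: "k \<in> K \<Longrightarrow> k \<in> carrier G" using subgroup.subset[OF sK] by blast
lemma BC: "b \<in> B \<Longrightarrow> b \<in> carrier G" using subgroup.subset[OF sB] by blast

lemma decomp: "x \<in> carrier G \<Longrightarrow> \<exists> h\<in> H. \<exists> k\<in> K. x = h \<otimes>\<^bsub>G\<^esub> k"
  using HK unfolding set_mult_def by blast

lemma central: assumes b: "b \<in> B" and x: "x \<in> carrier G" shows "b \<otimes>\<^bsub>G\<^esub> x = x \<otimes>\<^bsub>G\<^esub> b"
proof -
  obtain h k where hk: "h \<in> H" "k \<in> K" "x = h \<otimes>\<^bsub>G\<^esub> k" using decomp[OF x] by blast
  have bh: "b \<otimes>\<^bsub>G\<^esub> h = h \<otimes>\<^bsub>G\<^esub> b" using cHK hk(1) BK b by auto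
  have bk: "b \<otimes>\<^bsub>G\<^esub> k = k \<otimes>\<^bsub>G\<^esub> b" using cHK hk(2) BH b by auto
  have c: "b \<in> carrier G" "h \<in> carrier G" "k \<in> carrier G" using BC[OF b] HC[OF hk(1)] KC[OF hk(2)] .
  have "b \<otimes>\<^bsub>G\<^esub> (h \<otimes>\<^bsub>G\<^esub> k) = (b \<otimes>\<^bsub>G\<^esub> h) \<otimes>\<^bsub>G\<^esub> k" using c by (simp add: G.m_assoc)
  also have "\<dots> = h \<otimes>\<^bsub>G\<^esub> (b \<otimes>\<^bsub>G\<^esub> k)" unfolding bh using c by (simp add: G.m_assoc)
  also have "\<dots> = (h \<otimes>\<^bsub>G\<^esub> k) \<otimes>\<^bsub>G\<^esub> b" unfolding bk using c by (simp add: G.m_assoc)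
  finally show ?thesis using hk(3) by simp
qed

lemma nB: "B \<lhd> G"
proof -
  have "\<forall> x \<in> carrier G. \<forall> b \<in> B. x \<otimes>\<^bsub>G\<^esub> b \<otimes>\<^bsub>G\<^esub> inv\<^bsub>G\<^esub> x \<in> B"
  proof (intro ballI)
    fix x b assume x: "x \<in> carrier G" and b: "b \<in> B"
    have "x \<otimes>\<^bsub>G\<^esub> b \<otimes>\<^bsub>G\<^esub> inv\<^bsub>G\<^esub> x = b \<otimes>\<^bsub>G\<^esub> x \<otimes>\<^bsub>G\<^esub> inv\<^bsub>G\<^esub> x" using central[OF b x] by simp
    also have "\<dots> = b" using x BC[OF b] by (simp add: G.m_assoc)
    finally show "x \<otimes>\<^bsub>G\<^esub> b \<otimes>\<^bsub>G\<^esub> inv\<^bsub>G\<^esub> x \<in> B" using b by simp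
  qed
  then show ?thesis using G.normal_inv_iff sB by blast
qed

lemma fsym: assumes b: "b \<in> B" and x: "x \<in> carrier G" shows "f (x, b) = f (b, x)"
proof -
  obtain h k where hk: "h \<in> H" "k \<in> K" "x = h \<otimes>\<^bsub>G\<^esub> k" using decomp[OF x] by blast
  have c: "b \<in> carrier G" "h \<in> carrier G" "k \<in> carrier G" using BC[OF b] HC[OF hk(1)] KC[OF hk(2)] .
  have bdK: "b \<in> derived G K" and bdH: "b \<in> derived G H" using Bsub b by auto
  have "f (b, h) = f (h, b)"
    by (rule derived_sym[OF sK c(2) _ bdK]) (use cHK hk(1) KC in auto)
  then have ch: "chi b h = \<one>\<^bsub>D\<^esub>" using chi_one_iff c by simp
  have "f (b, k) = f (k, b)"
    by (rule derived_sym[OF sH c(3) _ bdH]) (use cHK hk(2) HC in auto)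
  then have ck: "chi b k = \<one>\<^bsub>D\<^esub>" using chi_one_iff c by simp
  have "chi b (h \<otimes>\<^bsub>G\<^esub> k) = chi b h \<otimes>\<^bsub>D\<^esub> chi b k"
    by (rule chi_mult) (use c central[OF b] in auto)
  then have "chi b x = \<one>\<^bsub>D\<^esub>" using ch ck hk(3) by simp
  then show ?thesis using chi_one_iff x c(1) by simp
qed


definition EE where
  "EE = \<lparr>carrier = carrier D \<times> B, monoid.mult = (\<lambda> p q. (fst p \<otimes>\<^bsub>D\<^esub> fst q \<otimes>\<^bsub>D\<^esub> f (snd p, snd q), snd p \<otimes>\<^bsub>G\<^esub> snd q)),
         one = (inv\<^bsub>D\<^esub> cc, \<one>\<^bsub>G\<^esub>)\<rparr>"

lemma EE_carrier: "carrier EE = carrier D \<times> B" unfolding EE_def by simp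
lemma EE_mult: "(d1, b1) \<otimes>\<^bsub>EE\<^esub> (d2, b2) = (d1 \<otimes>\<^bsub>D\<^esub> d2 \<otimes>\<^bsub>D\<^esub> f (b1, b2), b1 \<otimes>\<^bsub>G\<^esub> b2)" unfolding EE_def by simp
lemma EE_one: "\<one>\<^bsub>EE\<^esub> = (inv\<^bsub>D\<^esub> cc, \<one>\<^bsub>G\<^esub>)" unfolding EE_def by simp

lemma EE_comm_group: "comm_group EE"
proof (rule comm_groupI)
  fix x y assume "x \<in> carrier EE" "y \<in> carrier EE"
  then obtain d1 b1 d2 b2 where xy: "x = (d1, b1)" "y = (d2, b2)" "d1 \<in> carrier D" "d2 \<in> carrier D" "b1 \<in> B" "b2 \<in> B"
    unfolding EE_carrier by auto
  show "x \<otimes>\<^bsub>EE\<^esub> y \<in> carrier EE"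
    unfolding xy EE_mult EE_carrier using xy BC subgroup.m_closed[OF sB] by simp
  show "x \<otimes>\<^bsub>EE\<^esub> y = y \<otimes>\<^bsub>EE\<^esub> x"
    unfolding xy EE_mult using xy BC central fsym by (simp add: D.m_ac)
next
  show "\<one>\<^bsub>EE\<^esub> \<in> carrier EE" unfolding EE_one EE_carrier using subgroup.one_closed[OF sB] by simp
next
  fix x y z assume "x \<in> carrier EE" "y \<in> carrier EE" "z \<in> carrier EE"
  then obtain d1 b1 d2 b2 d3 b3 where xy: "x = (d1, b1)" "y = (d2, b2)" "z = (d3, b3)" "d1 \<in> carrier D" "d2 \<in> carrier D" "d3 \<in> carrier D"
     "b1 \<in> B" "b2 \<in> B" "b3 \<in> B"
    unfolding EE_carrier by auto
  have c: "b1 \<in> carrier G" "b2 \<in> carrier G" "b3 \<in> carrier G" using BC xy by auto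
  have "d1 \<otimes>\<^bsub>D\<^esub> d2 \<otimes>\<^bsub>D\<^esub> f (b1, b2) \<otimes>\<^bsub>D\<^esub> d3 \<otimes>\<^bsub>D\<^esub> f (b1 \<otimes>\<^bsub>G\<^esub> b2, b3) = (d1 \<otimes>\<^bsub>D\<^esub> d2 \<otimes>\<^bsub>D\<^esub> d3) \<otimes>\<^bsub>D\<^esub> (f (b1, b2) \<otimes>\<^bsub>D\<^esub> f (b1 \<otimes>\<^bsub>G\<^esub> b2, b3))"
    using xy c by (simp only: D.m_ac fc G.m_closed D.m_closed)
  also have "\<dots> = (d1 \<otimes>\<^bsub>D\<^esub> d2 \<otimes>\<^bsub>D\<^esub> d3) \<otimes>\<^bsub>D\<^esub> (f (b2, b3) \<otimes>\<^bsub>D\<^esub> f (b1, b2 \<otimes>\<^bsub>G\<^esub> b3))" using coc c by simp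
  also have "\<dots> = d1 \<otimes>\<^bsub>D\<^esub> (d2 \<otimes>\<^bsub>D\<^esub> d3 \<otimes>\<^bsub>D\<^esub> f (b2, b3)) \<otimes>\<^bsub>D\<^esub> f (b1, b2 \<otimes>\<^bsub>G\<^esub> b3)"
    using xy c by (simp only: D.m_ac fc G.m_closed D.m_closed)
  finally show "x \<otimes>\<^bsub>EE\<^esub> y \<otimes>\<^bsub>EE\<^esub> z = x \<otimes>\<^bsub>EE\<^esub> (y \<otimes>\<^bsub>EE\<^esub> z)"
    unfolding xy EE_mult using c by (simp add: G.m_assoc)
next
  fix x assume "x \<in> carrier EE"
  then obtain d b where x: "x = (d, b)" "d \<in> carrier D" "b \<in> B" unfolding EE_carrier by auto
  have c: "b \<in> carrier G" using BC x by auto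
  show "\<one>\<^bsub>EE\<^esub> \<otimes>\<^bsub>EE\<^esub> x = x"
    unfolding x EE_one EE_mult using x c f_1x by (simp add: D.m_ac)
  define y where "y = (inv\<^bsub>D\<^esub> cc \<otimes>\<^bsub>D\<^esub> inv\<^bsub>D\<^esub> d \<otimes>\<^bsub>D\<^esub> inv\<^bsub>D\<^esub> (f (inv\<^bsub>G\<^esub> b, b)), inv\<^bsub>G\<^esub> b)"
  have yc: "y \<in> carrier EE" unfolding y_def EE_carrier using x c subgroup.m_inv_closed[OF sB] by simp
  have "y \<otimes>\<^bsub>EE\<^esub> x = (inv\<^bsub>D\<^esub> cc \<otimes>\<^bsub>D\<^esub> (inv\<^bsub>D\<^esub> d \<otimes>\<^bsub>D\<^esub> d) \<otimes>\<^bsub>D\<^esub> (inv\<^bsub>D\<^esub> (f (inv\<^bsub>G\<^esub> b, b)) \<otimes>\<^bsub>D\<^esub> f (inv\<^bsub>G\<^esub> b, b)), inv\<^bsub>G\<^esub> b \<otimes>\<^bsub>G\<^esub> b)"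
    unfolding y_def x EE_mult using x c by (simp only: D.m_ac fc G.m_closed D.m_closed D.inv_closed G.inv_closed cc_c)
  also have "\<dots> = \<one>\<^bsub>EE\<^esub>" unfolding EE_one using x c by simp
  finally show "\<exists> y \<in> carrier EE. y \<otimes>\<^bsub>EE\<^esub> x = \<one>\<^bsub>EE\<^esub>" using yc by blast
qed



lemma rho_ex: "\<exists> rh. (\<forall> b\<in> B. rh b \<in> carrier D) \<and> (\<forall> b1\<in> B. \<forall> b2\<in> B. f (b1, b2) \<otimes>\<^bsub>D\<^esub> rh (b1 \<otimes>\<^bsub>G\<^esub> b2) = rh b1 \<otimes>\<^bsub>D\<^esub> rh b2)"
proof -
  interpret E: comm_group EE by (rule EE_comm_group)
  define A0 where "A0 = carrier D \<times> {\<one>\<^bsub>G\<^esub>}"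
  have B1: "\<one>\<^bsub>G\<^esub> \<in> B" using subgroup.one_closed[OF sB] .
  have A0s: "subgroup A0 EE"
  proof (rule E.subgroupI)
    show "A0 \<subseteq> carrier EE" unfolding A0_def EE_carrier using B1 by auto
    show "A0 \<noteq> {}" unfolding A0_def by auto
  next
    fix a assume "a \<in> A0"
    then obtain d where a: "a = (d, \<one>\<^bsub>G\<^esub>)" "d \<in> carrier D" unfolding A0_def by auto
    define y where "y = (inv\<^bsub>D\<^esub> cc \<otimes>\<^bsub>D\<^esub> inv\<^bsub>D\<^esub> d \<otimes>\<^bsub>D\<^esub> inv\<^bsub>D\<^esub> cc, \<one>\<^bsub>G\<^esub>)"
    have yc: "y \<in> carrier EE" unfolding y_def EE_carrier using a B1 by simp
    have ac: "a \<in> carrier EE" unfolding a EE_carrier using a B1 by simp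
    have "y \<otimes>\<^bsub>EE\<^esub> a = (inv\<^bsub>D\<^esub> cc \<otimes>\<^bsub>D\<^esub> (inv\<^bsub>D\<^esub> d \<otimes>\<^bsub>D\<^esub> d) \<otimes>\<^bsub>D\<^esub> (inv\<^bsub>D\<^esub> cc \<otimes>\<^bsub>D\<^esub> cc), \<one>\<^bsub>G\<^esub>)"
      unfolding y_def a EE_mult using a f_x1[of "\<one>\<^bsub>G\<^esub>"] by (simp only: D.m_ac G.one_closed G.l_one cc_c D.m_closed D.inv_closed)
    also have "\<dots> = \<one>\<^bsub>EE\<^esub>" unfolding EE_one using a by simp
    finally have "inv\<^bsub>EE\<^esub> a = y" using E.inv_equality[OF _ ac yc] by simp
    then show "inv\<^bsub>EE\<^esub> a \<in> A0" unfolding y_def A0_def using a by simp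
  next
    fix a b assume "a \<in> A0" "b \<in> A0"
    then obtain d d' where "a = (d, \<one>\<^bsub>G\<^esub>)" "b = (d', \<one>\<^bsub>G\<^esub>)" "d \<in> carrier D" "d' \<in> carrier D" unfolding A0_def by auto
    then show "a \<otimes>\<^bsub>EE\<^esub> b \<in> A0" unfolding A0_def by (simp add: EE_mult)
  qed
  define phi0 where "phi0 p = fst p \<otimes>\<^bsub>D\<^esub> cc" for p :: "_ \<times> 'a"
  have phic: "\<And> a. a \<in> A0 \<Longrightarrow> phi0 a \<in> carrier D" unfolding A0_def phi0_def by auto
  have phim: "\<And> a b. a \<in> A0 \<Longrightarrow> b \<in> A0 \<Longrightarrow> phi0 (a \<otimes>\<^bsub>EE\<^esub> b) = phi0 a \<otimes>\<^bsub>D\<^esub> phi0 b"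
  proof -
    fix a b assume "a \<in> A0" "b \<in> A0"
    then obtain d d' where ab: "a = (d, \<one>\<^bsub>G\<^esub>)" "b = (d', \<one>\<^bsub>G\<^esub>)" "d \<in> carrier D" "d' \<in> carrier D" unfolding A0_def by auto
    show "phi0 (a \<otimes>\<^bsub>EE\<^esub> b) = phi0 a \<otimes>\<^bsub>D\<^esub> phi0 b"
      unfolding ab EE_mult phi0_def using ab f_x1[of "\<one>\<^bsub>G\<^esub>"] by (simp add: D.m_ac)
  qed
  obtain r where rc: "\<forall> z\<in> carrier EE. r z \<in> carrier D"
    and rm: "\<forall> z\<in> carrier EE. \<forall> w\<in> carrier EE. r (z \<otimes>\<^bsub>EE\<^esub> w) = r z \<otimes>\<^bsub>D\<^esub> r w"
    and rA: "\<forall> a\<in> A0. r a = phi0 a"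
    using baer[OF EE_comm_group D.comm_group_axioms dv A0s phic phim] by blast
  define rh where "rh b = r (\<one>\<^bsub>D\<^esub>, b)" for b
  have "(\<forall> b\<in> B. rh b \<in> carrier D)" unfolding rh_def using rc EE_carrier by simp
  moreover have "\<forall> b1\<in> B. \<forall> b2\<in> B. f (b1, b2) \<otimes>\<^bsub>D\<^esub> rh (b1 \<otimes>\<^bsub>G\<^esub> b2) = rh b1 \<otimes>\<^bsub>D\<^esub> rh b2"
  proof (intro ballI)
    fix b1 b2 assume b: "b1 \<in> B" "b2 \<in> B"
    have bc: "b1 \<in> carrier G" "b2 \<in> carrier G" using BC b by auto
    have b12: "b1 \<otimes>\<^bsub>G\<^esub> b2 \<in> B" using subgroup.m_closed[OF sB b] .
    have fb: "f (b1, b2) \<in> carrier D" using bc by simp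
    have e1: "(\<one>\<^bsub>D\<^esub>, b1) \<otimes>\<^bsub>EE\<^esub> (\<one>\<^bsub>D\<^esub>, b2) = (f (b1, b2) \<otimes>\<^bsub>D\<^esub> inv\<^bsub>D\<^esub> cc, \<one>\<^bsub>G\<^esub>) \<otimes>\<^bsub>EE\<^esub> (\<one>\<^bsub>D\<^esub>, b1 \<otimes>\<^bsub>G\<^esub> b2)"
      unfolding EE_mult using bc f_1x[of "b1 \<otimes>\<^bsub>G\<^esub> b2"] fb by (simp add: D.m_assoc)
    have "rh b1 \<otimes>\<^bsub>D\<^esub> rh b2 = r ((\<one>\<^bsub>D\<^esub>, b1) \<otimes>\<^bsub>EE\<^esub> (\<one>\<^bsub>D\<^esub>, b2))"
      unfolding rh_def using rm b EE_carrier by simp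
    also have "\<dots> = r (f (b1, b2) \<otimes>\<^bsub>D\<^esub> inv\<^bsub>D\<^esub> cc, \<one>\<^bsub>G\<^esub>) \<otimes>\<^bsub>D\<^esub> rh (b1 \<otimes>\<^bsub>G\<^esub> b2)"
      unfolding e1 rh_def using rm b12 fb B1 EE_carrier by simp
    also have "\<dots> = f (b1, b2) \<otimes>\<^bsub>D\<^esub> rh (b1 \<otimes>\<^bsub>G\<^esub> b2)"
      using rA fb B1 unfolding A0_def phi0_def by (simp add: D.m_assoc)
    finally show "f (b1, b2) \<otimes>\<^bsub>D\<^esub> rh (b1 \<otimes>\<^bsub>G\<^esub> b2) = rh b1 \<otimes>\<^bsub>D\<^esub> rh b2" by simp
  qed
  ultimately show ?thesis by blast
qed



definition rho where
  "rho = (SOME rh. (\<forall> b\<in> B. rh b \<in> carrier D) \<and> (\<forall> b1\<in> B. \<forall> b2\<in> B. f (b1, b2) \<otimes>\<^bsub>D\<^esub> rh (b1 \<otimes>\<^bsub>G\<^esub> b2) = rh b1 \<otimes>\<^bsub>D\<^esub> rh b2))"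

lemma rho_props: "(\<forall> b\<in> B. rho b \<in> carrier D) \<and> (\<forall> b1\<in> B. \<forall> b2\<in> B. f (b1, b2) \<otimes>\<^bsub>D\<^esub> rho (b1 \<otimes>\<^bsub>G\<^esub> b2) = rho b1 \<otimes>\<^bsub>D\<^esub> rho b2)"
  unfolding rho_def by (rule someI_ex[OF rho_ex])

lemma rho_c [simp]: "b \<in> B \<Longrightarrow> rho b \<in> carrier D" using rho_props by blast
lemma rho_eq: "b1 \<in> B \<Longrightarrow> b2 \<in> B \<Longrightarrow> f (b1, b2) \<otimes>\<^bsub>D\<^esub> rho (b1 \<otimes>\<^bsub>G\<^esub> b2) = rho b1 \<otimes>\<^bsub>D\<^esub> rho b2" using rho_props by blast

definition tr where "tr x = (if x \<in> B then \<one>\<^bsub>G\<^esub> else (SOME y. y \<in> B #>\<^bsub>G\<^esub> x))"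
definition bt where "bt x = x \<otimes>\<^bsub>G\<^esub> inv\<^bsub>G\<^esub> (tr x)"

lemma B1: "\<one>\<^bsub>G\<^esub> \<in> B" using subgroup.one_closed[OF sB] .
lemma Bm: "a \<in> B \<Longrightarrow> b \<in> B \<Longrightarrow> a \<otimes>\<^bsub>G\<^esub> b \<in> B" using subgroup.m_closed[OF sB] .
lemma Bi: "a \<in> B \<Longrightarrow> inv\<^bsub>G\<^esub> a \<in> B" using subgroup.m_inv_closed[OF sB] .

lemma tr_in: assumes x: "x \<in> carrier G" shows "\<exists> b0 \<in> B. tr x = b0 \<otimes>\<^bsub>G\<^esub> x"
proof (cases "x \<in> B")
  case True
  then show ?thesis unfolding tr_def using Bi[OF True] x by (intro bexI[of _ "inv\<^bsub>G\<^esub> x"]) simp_all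
next
  case False
  have "x \<in> B #>\<^bsub>G\<^esub> x" using G.rcos_self[OF x sB] .
  then have "(SOME y. y \<in> B #>\<^bsub>G\<^esub> x) \<in> B #>\<^bsub>G\<^esub> x" by (rule someI)
  then show ?thesis unfolding tr_def using False unfolding r_coset_def by auto
qed

lemma tr_c: "x \<in> carrier G \<Longrightarrow> tr x \<in> carrier G" using tr_in BC by (metis G.m_closed)

lemma bt_B: assumes x: "x \<in> carrier G" shows "bt x \<in> B"
proof -
  obtain b0 where b0: "b0 \<in> B" "tr x = b0 \<otimes>\<^bsub>G\<^esub> x" using tr_in[OF x] by blast
  have "bt x = x \<otimes>\<^bsub>G\<^esub> (inv\<^bsub>G\<^esub> x \<otimes>\<^bsub>G\<^esub> inv\<^bsub>G\<^esub> b0)" unfolding bt_def b0(2) using x BC[OF b0(1)] by (simp add: G.inv_mult_group)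
  also have "\<dots> = inv\<^bsub>G\<^esub> b0" using x BC[OF b0(1)] by (simp add: G.m_assoc[symmetric])
  finally show ?thesis using Bi[OF b0(1)] by simp
qed

lemma bt_c: "x \<in> carrier G \<Longrightarrow> bt x \<in> carrier G" using bt_B BC by blast

lemma bt_tr: assumes x: "x \<in> carrier G" shows "bt x \<otimes>\<^bsub>G\<^esub> tr x = x"
  unfolding bt_def using x tr_c[OF x] by (simp add: G.m_assoc)

lemma tr_B: "b \<in> B \<Longrightarrow> tr b = \<one>\<^bsub>G\<^esub>" unfolding tr_def by simp
lemma bt_onB: "b \<in> B \<Longrightarrow> bt b = b" unfolding bt_def using tr_B BC by simp

lemma tr_mult: assumes b: "b \<in> B" and x: "x \<in> carrier G" shows "tr (b \<otimes>\<^bsub>G\<^esub> x) = tr x"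
proof (cases "x \<in> B")
  case True
  then show ?thesis using Bm[OF b True] tr_B by simp
next
  case False
  have bx: "b \<otimes>\<^bsub>G\<^esub> x \<notin> B"
  proof
    assume "b \<otimes>\<^bsub>G\<^esub> x \<in> B"
    then have "inv\<^bsub>G\<^esub> b \<otimes>\<^bsub>G\<^esub> (b \<otimes>\<^bsub>G\<^esub> x) \<in> B" using Bm Bi b by blast
    then show False using False x BC[OF b] by (simp add: G.m_assoc[symmetric])
  qed
  have "B #>\<^bsub>G\<^esub> (b \<otimes>\<^bsub>G\<^esub> x) = (B #>\<^bsub>G\<^esub> b) #>\<^bsub>G\<^esub> x" using G.coset_mult_assoc[OF subgroup.subset[OF sB] BC[OF b] x] by simp
  also have "\<dots> = B #>\<^bsub>G\<^esub> x" using subgroup.rcos_const[OF sB G.is_group b] by simp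
  finally show ?thesis unfolding tr_def using False bx by simp
qed

lemma bt_mult: assumes b: "b \<in> B" and x: "x \<in> carrier G" shows "bt (b \<otimes>\<^bsub>G\<^esub> x) = b \<otimes>\<^bsub>G\<^esub> bt x"
  unfolding bt_def tr_mult[OF b x] using BC[OF b] x tr_c[OF x] by (simp add: G.m_assoc)

definition gg where "gg x = f (bt x, tr x) \<otimes>\<^bsub>D\<^esub> inv\<^bsub>D\<^esub> (rho (bt x))"

lemma gg_c [simp]: "x \<in> carrier G \<Longrightarrow> gg x \<in> carrier D" unfolding gg_def using bt_c tr_c bt_B by simp

lemma gg_B: "b \<in> B \<Longrightarrow> gg b = cc \<otimes>\<^bsub>D\<^esub> inv\<^bsub>D\<^esub> (rho b)" unfolding gg_def using bt_onB tr_B f_x1 BC by simp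

definition ft where "ft x y = f (x, y) \<otimes>\<^bsub>D\<^esub> (gg x \<otimes>\<^bsub>D\<^esub> gg y \<otimes>\<^bsub>D\<^esub> inv\<^bsub>D\<^esub> (gg (x \<otimes>\<^bsub>G\<^esub> y)))"

lemma ft_c [simp]: "x \<in> carrier G \<Longrightarrow> y \<in> carrier G \<Longrightarrow> ft x y \<in> carrier D" unfolding ft_def by simp

lemma pair_cancel: "a \<in> carrier D \<Longrightarrow> u \<in> carrier D \<Longrightarrow> u \<otimes>\<^bsub>D\<^esub> (a \<otimes>\<^bsub>D\<^esub> inv\<^bsub>D\<^esub> a) = u" "a \<in> carrier D \<Longrightarrow> u \<in> carrier D \<Longrightarrow> u \<otimes>\<^bsub>D\<^esub> (inv\<^bsub>D\<^esub> a \<otimes>\<^bsub>D\<^esub> a) = u"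
  by simp_all

lemma ft_coc: assumes x: "x \<in> carrier G" and y: "y \<in> carrier G" and z: "z \<in> carrier G"
  shows "ft x y \<otimes>\<^bsub>D\<^esub> ft (x \<otimes>\<^bsub>G\<^esub> y) z = ft y z \<otimes>\<^bsub>D\<^esub> ft x (y \<otimes>\<^bsub>G\<^esub> z)"
proof -
  have c: "x \<otimes>\<^bsub>G\<^esub> y \<in> carrier G" "y \<otimes>\<^bsub>G\<^esub> z \<in> carrier G" "x \<otimes>\<^bsub>G\<^esub> (y \<otimes>\<^bsub>G\<^esub> z) \<in> carrier G" using x y z by auto
  have "ft x y \<otimes>\<^bsub>D\<^esub> ft (x \<otimes>\<^bsub>G\<^esub> y) z = ((f (x, y) \<otimes>\<^bsub>D\<^esub> f (x \<otimes>\<^bsub>G\<^esub> y, z)) \<otimes>\<^bsub>D\<^esub> (gg x \<otimes>\<^bsub>D\<^esub> gg y \<otimes>\<^bsub>D\<^esub> gg z \<otimes>\<^bsub>D\<^esub> inv\<^bsub>D\<^esub> (gg (x \<otimes>\<^bsub>G\<^esub> (y \<otimes>\<^bsub>G\<^esub> z))))) \<otimes>\<^bsub>D\<^esub> (gg (x \<otimes>\<^bsub>G\<^esub> y) \<otimes>\<^bsub>D\<^esub> inv\<^bsub>D\<^esub> (gg (x \<otimes>\<^bsub>G\<^esub> y)))"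
    unfolding ft_def G.m_assoc[OF x y z] using x y z c by (simp only: D.m_ac fc gg_c D.m_closed D.inv_closed)
  also have "\<dots> = (f (x, y) \<otimes>\<^bsub>D\<^esub> f (x \<otimes>\<^bsub>G\<^esub> y, z)) \<otimes>\<^bsub>D\<^esub> (gg x \<otimes>\<^bsub>D\<^esub> gg y \<otimes>\<^bsub>D\<^esub> gg z \<otimes>\<^bsub>D\<^esub> inv\<^bsub>D\<^esub> (gg (x \<otimes>\<^bsub>G\<^esub> (y \<otimes>\<^bsub>G\<^esub> z))))"
    using x y z c by (simp only: pair_cancel fc gg_c D.m_closed D.inv_closed)
  also have "\<dots> = (f (y, z) \<otimes>\<^bsub>D\<^esub> f (x, y \<otimes>\<^bsub>G\<^esub> z)) \<otimes>\<^bsub>D\<^esub> (gg x \<otimes>\<^bsub>D\<^esub> gg y \<otimes>\<^bsub>D\<^esub> gg z \<otimes>\<^bsub>D\<^esub> inv\<^bsub>D\<^esub> (gg (x \<otimes>\<^bsub>G\<^esub> (y \<otimes>\<^bsub>G\<^esub> z))))"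
    using coc[OF x y z] by simp
  also have "\<dots> = ((f (y, z) \<otimes>\<^bsub>D\<^esub> f (x, y \<otimes>\<^bsub>G\<^esub> z)) \<otimes>\<^bsub>D\<^esub> (gg x \<otimes>\<^bsub>D\<^esub> gg y \<otimes>\<^bsub>D\<^esub> gg z \<otimes>\<^bsub>D\<^esub> inv\<^bsub>D\<^esub> (gg (x \<otimes>\<^bsub>G\<^esub> (y \<otimes>\<^bsub>G\<^esub> z))))) \<otimes>\<^bsub>D\<^esub> (gg (y \<otimes>\<^bsub>G\<^esub> z) \<otimes>\<^bsub>D\<^esub> inv\<^bsub>D\<^esub> (gg (y \<otimes>\<^bsub>G\<^esub> z)))"
    using x y z c by (simp only: pair_cancel fc gg_c D.m_closed D.inv_closed)
  also have "\<dots> = ft y z \<otimes>\<^bsub>D\<^esub> ft x (y \<otimes>\<^bsub>G\<^esub> z)"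
    unfolding ft_def using x y z c by (simp only: D.m_ac fc gg_c D.m_closed D.inv_closed)
  finally show ?thesis .
qed



lemma ft_B1: assumes b: "b \<in> B" and x: "x \<in> carrier G" shows "ft b x = cc"
proof -
  define be where "be = bt x"
  define t where "t = tr x"
  have beB: "be \<in> B" unfolding be_def using bt_B[OF x] .
  have bc: "b \<in> carrier G" "be \<in> carrier G" "t \<in> carrier G" using BC b beB tr_c[OF x] unfolding t_def by auto
  have bbe: "b \<otimes>\<^bsub>G\<^esub> be \<in> B" using Bm[OF b beB] .
  have xe: "x = be \<otimes>\<^bsub>G\<^esub> t" unfolding be_def t_def using bt_tr[OF x] by simp
  have ggx: "gg x = f (be, t) \<otimes>\<^bsub>D\<^esub> inv\<^bsub>D\<^esub> (rho be)" unfolding gg_def be_def t_def ..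
  have ggbx: "gg (b \<otimes>\<^bsub>G\<^esub> x) = f (b \<otimes>\<^bsub>G\<^esub> be, t) \<otimes>\<^bsub>D\<^esub> inv\<^bsub>D\<^esub> (rho (b \<otimes>\<^bsub>G\<^esub> be))"
    unfolding gg_def bt_mult[OF b x] tr_mult[OF b x] be_def t_def ..
  have ggb: "gg b = cc \<otimes>\<^bsub>D\<^esub> inv\<^bsub>D\<^esub> (rho b)" using gg_B[OF b] .
  have e1: "f (b, be) \<otimes>\<^bsub>D\<^esub> f (b \<otimes>\<^bsub>G\<^esub> be, t) = f (be, t) \<otimes>\<^bsub>D\<^esub> f (b, x)" using coc[OF bc] xe by simp
  have e2: "f (b, be) \<otimes>\<^bsub>D\<^esub> rho (b \<otimes>\<^bsub>G\<^esub> be) = rho b \<otimes>\<^bsub>D\<^esub> rho be" using rho_eq[OF b beB] .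
  have cs: "f (b, x) \<in> carrier D" "f (be, t) \<in> carrier D" "f (b \<otimes>\<^bsub>G\<^esub> be, t) \<in> carrier D" "f (b, be) \<in> carrier D" "rho b \<in> carrier D" "rho be \<in> carrier D" "rho (b \<otimes>\<^bsub>G\<^esub> be) \<in> carrier D"
    using bc x b beB bbe by auto
  define K where "K = rho b \<otimes>\<^bsub>D\<^esub> rho be \<otimes>\<^bsub>D\<^esub> rho (b \<otimes>\<^bsub>G\<^esub> be)"
  have Kc: "K \<in> carrier D" unfolding K_def using cs by simp
  have "(f (b, x) \<otimes>\<^bsub>D\<^esub> gg b \<otimes>\<^bsub>D\<^esub> gg x) \<otimes>\<^bsub>D\<^esub> K = ((f (b, be) \<otimes>\<^bsub>D\<^esub> f (b \<otimes>\<^bsub>G\<^esub> be, t)) \<otimes>\<^bsub>D\<^esub> cc \<otimes>\<^bsub>D\<^esub> rho (b \<otimes>\<^bsub>G\<^esub> be)) \<otimes>\<^bsub>D\<^esub> (inv\<^bsub>D\<^esub> (rho b) \<otimes>\<^bsub>D\<^esub> rho b) \<otimes>\<^bsub>D\<^esub> (inv\<^bsub>D\<^esub> (rho be) \<otimes>\<^bsub>D\<^esub> rho be)"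
    unfolding ggb ggx K_def e1 using cs by (simp only: D.m_ac cc_c D.m_closed D.inv_closed)
  also have "\<dots> = (f (b, be) \<otimes>\<^bsub>D\<^esub> f (b \<otimes>\<^bsub>G\<^esub> be, t)) \<otimes>\<^bsub>D\<^esub> cc \<otimes>\<^bsub>D\<^esub> rho (b \<otimes>\<^bsub>G\<^esub> be)"
    using cs by (simp only: pair_cancel cc_c D.m_closed D.inv_closed)
  also have "\<dots> = (cc \<otimes>\<^bsub>D\<^esub> f (b \<otimes>\<^bsub>G\<^esub> be, t) \<otimes>\<^bsub>D\<^esub> (f (b, be) \<otimes>\<^bsub>D\<^esub> rho (b \<otimes>\<^bsub>G\<^esub> be))) \<otimes>\<^bsub>D\<^esub> (inv\<^bsub>D\<^esub> (rho (b \<otimes>\<^bsub>G\<^esub> be)) \<otimes>\<^bsub>D\<^esub> rho (b \<otimes>\<^bsub>G\<^esub> be))"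
    using cs by (simp only: pair_cancel D.m_ac cc_c D.m_closed D.inv_closed)
  also have "\<dots> = (cc \<otimes>\<^bsub>D\<^esub> f (b \<otimes>\<^bsub>G\<^esub> be, t) \<otimes>\<^bsub>D\<^esub> (rho b \<otimes>\<^bsub>D\<^esub> rho be)) \<otimes>\<^bsub>D\<^esub> (inv\<^bsub>D\<^esub> (rho (b \<otimes>\<^bsub>G\<^esub> be)) \<otimes>\<^bsub>D\<^esub> rho (b \<otimes>\<^bsub>G\<^esub> be))"
    unfolding e2 ..
  also have "\<dots> = (cc \<otimes>\<^bsub>D\<^esub> gg (b \<otimes>\<^bsub>G\<^esub> x)) \<otimes>\<^bsub>D\<^esub> K"
    unfolding ggbx K_def using cs by (simp only: D.m_ac cc_c D.m_closed D.inv_closed)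
  finally have h: "f (b, x) \<otimes>\<^bsub>D\<^esub> gg b \<otimes>\<^bsub>D\<^esub> gg x = cc \<otimes>\<^bsub>D\<^esub> gg (b \<otimes>\<^bsub>G\<^esub> x)" using Kc cs bc x by simp
  have "ft b x = (f (b, x) \<otimes>\<^bsub>D\<^esub> gg b \<otimes>\<^bsub>D\<^esub> gg x) \<otimes>\<^bsub>D\<^esub> inv\<^bsub>D\<^esub> (gg (b \<otimes>\<^bsub>G\<^esub> x))"
    unfolding ft_def using bc x by (simp only: D.m_assoc fc gg_c D.m_closed D.inv_closed G.m_closed)
  also have "\<dots> = (cc \<otimes>\<^bsub>D\<^esub> gg (b \<otimes>\<^bsub>G\<^esub> x)) \<otimes>\<^bsub>D\<^esub> inv\<^bsub>D\<^esub> (gg (b \<otimes>\<^bsub>G\<^esub> x))" unfolding h ..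
  also have "\<dots> = cc" using bc x by (simp add: D.m_assoc)
  finally show ?thesis .
qed

lemma ft_xB: assumes b: "b \<in> B" and x: "x \<in> carrier G" shows "ft x b = ft b x"
  unfolding ft_def using fsym[OF b x] central[OF b x] BC[OF b] x by (simp only: D.m_ac fc gg_c D.m_closed D.inv_closed G.m_closed)

lemma ft_Bl: assumes b: "b \<in> B" and x: "x \<in> carrier G" and y: "y \<in> carrier G" shows "ft (b \<otimes>\<^bsub>G\<^esub> x) y = ft x y"
proof -
  have bc: "b \<in> carrier G" using BC b .
  have "cc \<otimes>\<^bsub>D\<^esub> ft (b \<otimes>\<^bsub>G\<^esub> x) y = ft x y \<otimes>\<^bsub>D\<^esub> cc" using ft_coc[OF bc x y] ft_B1[OF b x] ft_B1[OF b G.m_closed[OF x y]] by simp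
  then have "ft (b \<otimes>\<^bsub>G\<^esub> x) y \<otimes>\<^bsub>D\<^esub> cc = ft x y \<otimes>\<^bsub>D\<^esub> cc" using bc x y by (simp add: D.m_comm)
  then show ?thesis using bc x y by simp
qed

lemma ft_Br: assumes b: "b \<in> B" and x: "x \<in> carrier G" and y: "y \<in> carrier G" shows "ft x (b \<otimes>\<^bsub>G\<^esub> y) = ft x y"
proof -
  have bc: "b \<in> carrier G" using BC b .
  have "cc \<otimes>\<^bsub>D\<^esub> ft (x \<otimes>\<^bsub>G\<^esub> b) y = cc \<otimes>\<^bsub>D\<^esub> ft x (b \<otimes>\<^bsub>G\<^esub> y)"
    using ft_coc[OF x bc y] ft_B1[OF b y] ft_xB[OF b x] ft_B1[OF b x] by simp
  then have "ft (x \<otimes>\<^bsub>G\<^esub> b) y = ft x (b \<otimes>\<^bsub>G\<^esub> y)" using bc x y by simp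
  then show ?thesis using ft_Bl[OF b x y] central[OF b x] by simp
qed

lemma ft_coset: assumes x: "x \<in> carrier G" and y: "y \<in> carrier G" and x': "x' \<in> B #>\<^bsub>G\<^esub> x" and y': "y' \<in> B #>\<^bsub>G\<^esub> y"
  shows "ft x' y' = ft x y"
proof -
  obtain b1 b2 where "b1 \<in> B" "x' = b1 \<otimes>\<^bsub>G\<^esub> x" "b2 \<in> B" "y' = b2 \<otimes>\<^bsub>G\<^esub> y" using x' y' unfolding r_coset_def by blast
  then show ?thesis using ft_Bl ft_Br x y BC by (metis G.m_closed)
qed



definition rep where "rep U = (SOME x. x \<in> U)"
definition fq where "fq = restrict (\<lambda> p. ft (rep (fst p)) (rep (snd p))) (carrier (G Mod B) \<times> carrier (G Mod B))"

lemma rep_in: assumes x: "x \<in> carrier G" shows "rep (B #>\<^bsub>G\<^esub> x) \<in> B #>\<^bsub>G\<^esub> x"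
proof -
  have "x \<in> B #>\<^bsub>G\<^esub> x" by (rule G.rcos_self[OF x sB])
  then show ?thesis unfolding rep_def by (rule someI)
qed

lemma rep_c: assumes x: "x \<in> carrier G" shows "rep (B #>\<^bsub>G\<^esub> x) \<in> carrier G"
proof -
  obtain b where "b \<in> B" "rep (B #>\<^bsub>G\<^esub> x) = b \<otimes>\<^bsub>G\<^esub> x" using rep_in[OF x] unfolding r_coset_def by blast
  then show ?thesis using BC x by simp
qed

lemma fq_apply: assumes x: "x \<in> carrier G" and y: "y \<in> carrier G" shows "fq (B #>\<^bsub>G\<^esub> x, B #>\<^bsub>G\<^esub> y) = ft x y"
proof -
  note q = quot_facts[OF G.is_group nB]
  have "fq (B #>\<^bsub>G\<^esub> x, B #>\<^bsub>G\<^esub> y) = ft (rep (B #>\<^bsub>G\<^esub> x)) (rep (B #>\<^bsub>G\<^esub> y))"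
    unfolding fq_def using q(1)[OF x] q(1)[OF y] by simp
  also have "\<dots> = ft x y" using ft_coset[OF x y rep_in[OF x] rep_in[OF y]] .
  finally show ?thesis .
qed

lemma fq_coc: "fq \<in> two_cocycles (G Mod B) D"
proof -
  note q = quot_facts[OF G.is_group nB]
  have "fq \<in> (carrier (G Mod B) \<times> carrier (G Mod B)) \<rightarrow>\<^sub>E carrier D"
    unfolding fq_def
  proof (rule restrict_PiE_iff[THEN iffD2], intro ballI)
    fix p assume p: "p \<in> carrier (G Mod B) \<times> carrier (G Mod B)"
    then have "fst p \<in> carrier (G Mod B)" "snd p \<in> carrier (G Mod B)" by auto
    then obtain x y where "x \<in> carrier G" "y \<in> carrier G" "fst p = B #>\<^bsub>G\<^esub> x" "snd p = B #>\<^bsub>G\<^esub> y" using q(3) by metis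
    then show "ft (rep (fst p)) (rep (snd p)) \<in> carrier D" using rep_c by simp
  qed
  moreover have "\<forall> U\<in> carrier (G Mod B). \<forall> V\<in> carrier (G Mod B). \<forall> W\<in> carrier (G Mod B).
     fq (U, V) \<otimes>\<^bsub>D\<^esub> fq (U \<otimes>\<^bsub>G Mod B\<^esub> V, W) = fq (V, W) \<otimes>\<^bsub>D\<^esub> fq (U, V \<otimes>\<^bsub>G Mod B\<^esub> W)"
  proof (intro ballI)
    fix U V W assume UVW: "U \<in> carrier (G Mod B)" "V \<in> carrier (G Mod B)" "W \<in> carrier (G Mod B)"
    obtain x where x: "x \<in> carrier G" "U = B #>\<^bsub>G\<^esub> x" using q(3)[OF UVW(1)] by blast
    obtain y where y: "y \<in> carrier G" "V = B #>\<^bsub>G\<^esub> y" using q(3)[OF UVW(2)] by blast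
    obtain z where z: "z \<in> carrier G" "W = B #>\<^bsub>G\<^esub> z" using q(3)[OF UVW(3)] by blast
    have xyz: "x \<in> carrier G" "y \<in> carrier G" "z \<in> carrier G" and e: "U = B #>\<^bsub>G\<^esub> x" "V = B #>\<^bsub>G\<^esub> y" "W = B #>\<^bsub>G\<^esub> z"
      using x y z by auto
    show "fq (U, V) \<otimes>\<^bsub>D\<^esub> fq (U \<otimes>\<^bsub>G Mod B\<^esub> V, W) = fq (V, W) \<otimes>\<^bsub>D\<^esub> fq (U, V \<otimes>\<^bsub>G Mod B\<^esub> W)"
    proof -
      have uv: "U \<otimes>\<^bsub>G Mod B\<^esub> V = B #>\<^bsub>G\<^esub> (x \<otimes>\<^bsub>G\<^esub> y)" unfolding e(1,2) by (rule q(2)[OF xyz(1,2)])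
      have vw: "V \<otimes>\<^bsub>G Mod B\<^esub> W = B #>\<^bsub>G\<^esub> (y \<otimes>\<^bsub>G\<^esub> z)" unfolding e(2,3) by (rule q(2)[OF xyz(2,3)])
      have a1: "fq (U, V) = ft x y" unfolding e(1,2) by (rule fq_apply[OF xyz(1,2)])
      have a2: "fq (V, W) = ft y z" unfolding e(2,3) by (rule fq_apply[OF xyz(2,3)])
      have a3: "fq (U \<otimes>\<^bsub>G Mod B\<^esub> V, W) = ft (x \<otimes>\<^bsub>G\<^esub> y) z" unfolding uv e(3) by (rule fq_apply[OF G.m_closed[OF xyz(1,2)] xyz(3)])
      have a4: "fq (U, V \<otimes>\<^bsub>G Mod B\<^esub> W) = ft x (y \<otimes>\<^bsub>G\<^esub> z)" unfolding vw e(1) by (rule fq_apply[OF xyz(1) G.m_closed[OF xyz(2,3)]])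
      show ?thesis unfolding a1 a2 a3 a4 by (rule ft_coc[OF xyz])
    qed
  qed
  ultimately show ?thesis unfolding two_cocycles_def by (intro CollectI conjI)
qed

lemma main_local: "(inflate_cocycle G B fq, f) \<in> cohomologous G D"
proof -
  have i: "inflate_cocycle G B fq \<in> two_cocycles G D"
    using inflate_two_cocycle[OF G.is_group D.comm_group_axioms nB fq_coc] .
  have g: "gg \<in> carrier G \<rightarrow> carrier D" by simp
  have "\<forall> x\<in>carrier G. \<forall> y\<in>carrier G. inflate_cocycle G B fq (x, y) = f (x, y) \<otimes>\<^bsub>D\<^esub> (gg x \<otimes>\<^bsub>D\<^esub> gg y \<otimes>\<^bsub>D\<^esub> inv\<^bsub>D\<^esub> (gg (x \<otimes>\<^bsub>G\<^esub> y)))"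
  proof (intro ballI)
    fix x y assume "x \<in> carrier G" "y \<in> carrier G"
    then show "inflate_cocycle G B fq (x, y) = f (x, y) \<otimes>\<^bsub>D\<^esub> (gg x \<otimes>\<^bsub>D\<^esub> gg y \<otimes>\<^bsub>D\<^esub> inv\<^bsub>D\<^esub> (gg (x \<otimes>\<^bsub>G\<^esub> y)))"
      using fq_apply[of x y] inflate_apply[of x G y B fq] unfolding ft_def by simp
  qed
  then have "\<exists> g \<in> carrier G \<rightarrow> carrier D. \<forall> x\<in>carrier G. \<forall> y\<in>carrier G. inflate_cocycle G B fq (x, y) = f (x, y) \<otimes>\<^bsub>D\<^esub> (g x \<otimes>\<^bsub>D\<^esub> g y \<otimes>\<^bsub>D\<^esub> inv\<^bsub>D\<^esub> (g (x \<otimes>\<^bsub>G\<^esub> y)))"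
    using g by blast
  then show ?thesis using i fcoc by (simp add: cohomologous_def)
qed


end

theorem theorem3p1:
  fixes G :: "('a, 'b) monoid_scheme" and D :: "('d, 'e) monoid_scheme"
    and H K B :: "'a set"
  assumes "group G"
    and "H \<lhd> G" and "K \<lhd> G"
    and "H <#>\<^bsub>G\<^esub> K = carrier G"
    and "\<forall> h\<in> H. \<forall> k\<in> K. h \<otimes>\<^bsub>G\<^esub> k = k \<otimes>\<^bsub>G\<^esub> h"
    and "comm_group D" and "divisible_group D"
    and "subgroup B G" and "B \<subseteq> derived G H \<inter> derived G K"
  shows "inflation G B D ` H2 (G Mod B) D = H2 G D"
proof -
  interpret G: group G by fact
  interpret D: comm_group D by fact
  have set_of: "\<And> f. f \<in> two_cocycles G D \<Longrightarrow> setting G D f H K B"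
  proof -
    fix f assume f: "f \<in> two_cocycles G D"
    show "setting G D f H K B"
      by (intro setting.intro cocyc.intro setting_axioms.intro cocyc_axioms.intro) (use assms f in auto)
  qed
  define f0 where "f0 = restrict (\<lambda>_. \<one>\<^bsub>D\<^esub>) (carrier G \<times> carrier G)"
  have f0: "f0 \<in> two_cocycles G D" unfolding two_cocycles_def f0_def by auto
  interpret S0: setting G D f0 H K B using set_of[OF f0] .
  have nB: "B \<lhd> G" by (rule S0.nB)
  have QG: "group (G Mod B)" using normal.factorgroup_is_group[OF nB] .
  have QM: "monoid (G Mod B)" using QG group.is_monoid by blast
  have eQ: "equiv (two_cocycles (G Mod B) D) (cohomologous (G Mod B) D)" by (rule coh_equiv[OF QM D.comm_group_axioms])
  have eG: "equiv (two_cocycles G D) (cohomologous G D)" by (rule coh_equiv[OF G.is_monoid D.comm_group_axioms])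
  have cohQ_sub: "cohomologous (G Mod B) D \<subseteq> two_cocycles (G Mod B) D \<times> two_cocycles (G Mod B) D"
    unfolding cohomologous_def by (rule subsetI, clarsimp)
  show ?thesis
  proof
    show "inflation G B D ` H2 (G Mod B) D \<subseteq> H2 G D"
    proof
      fix U assume "U \<in> inflation G B D ` H2 (G Mod B) D"
      then obtain C where C: "C \<in> H2 (G Mod B) D" and U: "U = inflation G B D C" by blast
      then obtain g0 where g0: "g0 \<in> two_cocycles (G Mod B) D" and Cg: "C = cohomologous (G Mod B) D `` {g0}"
        unfolding H2_def by (auto elim: quotientE)
      have "g0 \<in> C" unfolding Cg using equiv_class_self[OF eQ g0] .
      then have "(SOME g. g \<in> C) \<in> C" by (rule someI[where P="\<lambda> g. g \<in> C"])
      then have "(g0, SOME g. g \<in> C) \<in> cohomologous (G Mod B) D" unfolding Cg by simp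
      then have g1: "(SOME g. g \<in> C) \<in> two_cocycles (G Mod B) D" using cohQ_sub by blast
      have "inflate_cocycle G B (SOME g. g \<in> C) \<in> two_cocycles G D"
        by (rule inflate_two_cocycle[OF G.is_group D.comm_group_axioms nB g1])
      then show "U \<in> H2 G D" unfolding U inflation_def H2_def by (rule quotientI)
    qed
  next
    show "H2 G D \<subseteq> inflation G B D ` H2 (G Mod B) D"
    proof
      fix U assume "U \<in> H2 G D"
      then obtain f where f: "f \<in> two_cocycles G D" and Uf: "U = cohomologous G D `` {f}"
        unfolding H2_def by (auto elim: quotientE)
      interpret S: setting G D f H K B using set_of[OF f] .
      define C where "C = cohomologous (G Mod B) D `` {S.fq}"
      have CH: "C \<in> H2 (G Mod B) D" unfolding C_def H2_def using S.fq_coc by (rule quotientI)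
      have "S.fq \<in> C" unfolding C_def using equiv_class_self[OF eQ S.fq_coc] .
      then have "(SOME g. g \<in> C) \<in> C" by (rule someI[where P="\<lambda> g. g \<in> C"])
      then have r1: "(S.fq, SOME g. g \<in> C) \<in> cohomologous (G Mod B) D" unfolding C_def by simp
      have r2: "(inflate_cocycle G B S.fq, inflate_cocycle G B (SOME g. g \<in> C)) \<in> cohomologous G D"
        by (rule inflate_coh[OF G.is_group D.comm_group_axioms nB r1])
      have r3: "(inflate_cocycle G B (SOME g. g \<in> C), f) \<in> cohomologous G D"
        using coh_trans[OF G.is_monoid D.comm_group_axioms coh_sym[OF G.is_monoid D.comm_group_axioms r2] S.main_local] .
      have "inflation G B D C = U"
        unfolding inflation_def Uf using equiv_class_eq[OF eG r3] .
      then show "U \<in> inflation G B D ` H2 (G Mod B) D" using CH by blast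
    qed
  qed
qed

end
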